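(* Let $p$ be a prime, $n\ge 1$ an integer, $\mathbb{F}=\mathbb{F}_{p^n}$ and $F=p^n$. Let $k$ be an integer with $2\le k\le F$, and let $\theta$ and $\delta\ge 0$ be real numbers. Suppose $f,g:\mathbb{F}\to[0,1]$ satisfy $f(m)\ge g(m)\ge 0$ for all $m\in\mathbb{F}$, and $$\mathbb{E}(f)\ \ge\ \mathbb{E}(g)\ \ge\ \max\left(F^{-\theta},\ 8p^{-1/2}k^{-1}\right).$$ Suppose further that $\sigma_k\le \delta^2F^2$. Then $$\Lambda_3(f,g,f)\ \ge\ \frac{p^{-2}\binom{k}{2}^{-1}F^{-4\theta}}{128}-\frac{9\delta F^{-2\theta}}{8}\quad\text{and}\quad \Lambda_3(g,f,f)\ \ge\ \frac{p^{-2}\binom{k}{2}^{-1}F^{-4\theta}}{128}-\frac{9\delta F^{-2\theta}}{8}.$$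
   Context: For $h:\mathbb{F}\to\mathbb{C}$, $\mathbb{E}(h)=F^{-1}\sum_{m\in\mathbb{F}}h(m)$. Identify $\mathbb{F}$ with $\mathbb{F}_p^n$ via a fixed standard $\mathbb{F}_p$-basis, and let $a\cdot m$ be the dot product. With $\omega=e^{2\pi i/p}$, $\hat h(a)=\sum_{m}h(m)\omega^{a\cdot m}$. Enumerate $\mathbb{F}=\{a_1,\dots,a_F\}$ so that $|\hat f(a_1)|\ge|\hat f(a_2)|\ge\cdots\ge|\hat f(a_F)|$ and put $f_j=\hat f(a_j)$; then $\sigma_i=\sum_{i<j\le F}|f_j|^2$ (the tail of the spectral $L^2$ norm of $\hat f$). For $f_1,f_2,f_3:\mathbb{F}\to\mathbb{C}$ (here meaning functions), $\Lambda_3(f_1,f_2,f_3)=F^{-2}\sum_{m,d\in\mathbb{F}}f_1(m)f_2(m+d)f_3(m+2d)$. *)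

theory Defs
  imports "HOL-Analysis.Analysis"
begin

text \<open>The field \<open>F_{p^n}\<close> is identified with \<open>F_p^n\<close> via a fixed basis.\<close>

definition Fv :: "nat \<Rightarrow> nat \<Rightarrow> (nat \<Rightarrow> nat) set" where
  "Fv p n = {m. \<forall>i. (i < n \<longrightarrow> m i < p) \<and> (n \<le> i \<longrightarrow> m i = 0)}"

definition vadd :: "nat \<Rightarrow> (nat \<Rightarrow> nat) \<Rightarrow> (nat \<Rightarrow> nat) \<Rightarrow> (nat \<Rightarrow> nat)" where
  "vadd p x y = (\<lambda>i. (x i + y i) mod p)"

definition dotp :: "nat \<Rightarrow> (nat \<Rightarrow> nat) \<Rightarrow> (nat \<Rightarrow> nat) \<Rightarrow> nat" where
  "dotp n a m = (\<Sum>i<n. a i * m i)"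

definition Ex :: "nat \<Rightarrow> nat \<Rightarrow> ((nat \<Rightarrow> nat) \<Rightarrow> 'a::field) \<Rightarrow> 'a" where
  "Ex p n h = (\<Sum>m\<in>Fv p n. h m) / of_nat (card (Fv p n))"

definition fhat :: "nat \<Rightarrow> nat \<Rightarrow> ((nat \<Rightarrow> nat) \<Rightarrow> complex) \<Rightarrow> (nat \<Rightarrow> nat) \<Rightarrow> complex" where
  "fhat p n h a = (\<Sum>m\<in>Fv p n. h m * exp (2 * pi * \<i> / of_nat p) ^ dotp n a m)"

definition sorted_enum :: "nat \<Rightarrow> nat \<Rightarrow> ((nat \<Rightarrow> nat) \<Rightarrow> complex) \<Rightarrow> (nat \<Rightarrow> (nat \<Rightarrow> nat)) \<Rightarrow> bool" where
  "sorted_enum p n h e \<longleftrightarrow> bij_betw e {1..card (Fv p n)} (Fv p n) \<and>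
     (\<forall>i j. 1 \<le> i \<longrightarrow> i \<le> j \<longrightarrow> j \<le> card (Fv p n) \<longrightarrow>
        norm (fhat p n h (e j)) \<le> norm (fhat p n h (e i)))"

text \<open>\<open>\<sigma>_i = \<Sum>_{i<j\<le>F} |f_j|^2\<close> (independent of the choice of sorted enumeration).\<close>
definition sigma :: "nat \<Rightarrow> nat \<Rightarrow> ((nat \<Rightarrow> nat) \<Rightarrow> complex) \<Rightarrow> nat \<Rightarrow> real" where
  "sigma p n h i = (let e = (SOME e. sorted_enum p n h e) in
     (\<Sum>j\<in>{i<..card (Fv p n)}. (norm (fhat p n h (e j)))\<^sup>2))"

definition Lambda3 :: "nat \<Rightarrow> nat \<Rightarrow> ((nat \<Rightarrow> nat) \<Rightarrow> 'a::field) \<Rightarrow> ((nat \<Rightarrow> nat) \<Rightarrow> 'a)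
    \<Rightarrow> ((nat \<Rightarrow> nat) \<Rightarrow> 'a) \<Rightarrow> 'a" where
  "Lambda3 p n f1 f2 f3 =
     (\<Sum>m\<in>Fv p n. \<Sum>d\<in>Fv p n.
        f1 m * f2 (vadd p m d) * f3 (vadd p m (vadd p d d))) / of_nat (card (Fv p n))^2"

end

theory Submission
  imports Defs "HOL-Library.FuncSet"
begin


lemma Fv_card: assumes "p > 0" shows "card (Fv p n) = p ^ n" "finite (Fv p n)"
proof -
  have eq: "Fv p n = (\<lambda>m i. if i < n then m i else 0) ` (PiE {..<n} (\<lambda>_. {..<p}))"
  proof
    show "Fv p n \<subseteq> (\<lambda>m i. if i < n then m i else 0) ` (PiE {..<n} (\<lambda>_. {..<p}))"
    proof
      fix m assume m: "m \<in> Fv p n"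
      have "m = (\<lambda>i. if i < n then (restrict m {..<n}) i else 0)"
        using m by (auto simp: Fv_def fun_eq_iff)
      moreover have "restrict m {..<n} \<in> PiE {..<n} (\<lambda>_. {..<p})" using m by (auto simp: Fv_def)
      ultimately show "m \<in> (\<lambda>m i. if i < n then m i else 0) ` (PiE {..<n} (\<lambda>_. {..<p}))" by blast
    qed
    show "(\<lambda>m i. if i < n then m i else 0) ` (PiE {..<n} (\<lambda>_. {..<p})) \<subseteq> Fv p n"
      by (auto simp: Fv_def PiE_def Pi_def)
  qed
  have inj: "inj_on (\<lambda>m i. if i < n then m i else 0) (PiE {..<n} (\<lambda>_. {..<p}))"
    by (auto simp: inj_on_def fun_eq_iff PiE_def extensional_def) (metis)
  show "card (Fv p n) = p ^ n" unfolding eq using inj by (simp add: card_image card_PiE)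
  show "finite (Fv p n)" unfolding eq by (intro finite_imageI finite_PiE) auto
qed


definition zv :: "nat \<Rightarrow> nat" where "zv = (\<lambda>_. 0)"
definition smul :: "nat \<Rightarrow> nat \<Rightarrow> (nat \<Rightarrow> nat) \<Rightarrow> (nat \<Rightarrow> nat)" where
  "smul p s d = (\<lambda>i. (s * d i) mod p)"
definition chi :: "nat \<Rightarrow> nat \<Rightarrow> (nat \<Rightarrow> nat) \<Rightarrow> (nat \<Rightarrow> nat) \<Rightarrow> complex" where
  "chi p n a m = exp (2 * pi * \<i> / of_nat p) ^ dotp n a m"

lemma zv_Fv: "0 < p \<Longrightarrow> zv \<in> Fv p n" by (auto simp: zv_def Fv_def)
lemma vadd_Fv: "0 < p \<Longrightarrow> x \<in> Fv p n \<Longrightarrow> y \<in> Fv p n \<Longrightarrow> vadd p x y \<in> Fv p n"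
  by (auto simp: Fv_def vadd_def)
lemma smul_Fv: "0 < p \<Longrightarrow> x \<in> Fv p n \<Longrightarrow> smul p s x \<in> Fv p n"
  by (auto simp: Fv_def smul_def)
lemma vadd_comm: "vadd p x y = vadd p y x" by (auto simp: vadd_def add.commute)
lemma vadd_assoc: "vadd p (vadd p x y) z = vadd p x (vadd p y z)"
  by (auto simp: vadd_def fun_eq_iff mod_add_eq add.assoc mod_add_left_eq mod_add_right_eq)
lemma Fv_mod: "x \<in> Fv p n \<Longrightarrow> 0 < p \<Longrightarrow> x i mod p = x i"
  by (cases "i < n") (auto simp: Fv_def)
lemma vadd_zv: "0 < p \<Longrightarrow> x \<in> Fv p n \<Longrightarrow> vadd p x zv = x"
  by (auto simp: vadd_def zv_def fun_eq_iff Fv_mod)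
lemma smul_mult: "smul p s (smul p t x) = smul p (s * t) x"
  by (auto simp: smul_def fun_eq_iff mod_mult_right_eq mult.assoc)
lemma smul_one: "0 < p \<Longrightarrow> x \<in> Fv p n \<Longrightarrow> r mod p = 1 \<Longrightarrow> smul p r x = x"
proof -
  assume a: "0 < p" "x \<in> Fv p n" "r mod p = 1"
  show ?thesis unfolding smul_def fun_eq_iff
  proof
    fix i
    have "(r * x i) mod p = ((r mod p) * x i) mod p" by (simp add: mod_mult_left_eq)
    thus "r * x i mod p = x i" using a by (simp add: Fv_mod)
  qed
qed
lemma smul_vadd: "smul p s (vadd p x y) = vadd p (smul p s x) (smul p s y)"
  by (auto simp: smul_def vadd_def fun_eq_iff mod_mult_right_eq distrib_left mod_add_eq)
lemma smul_two: "smul p 2 x = vadd p x x"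
  by (auto simp: smul_def vadd_def fun_eq_iff mult_2)
lemma vadd_neg: "0 < p \<Longrightarrow> x \<in> Fv p n \<Longrightarrow> vadd p x (smul p (p - 1) x) = zv"
proof -
  assume a: "0 < p" "x \<in> Fv p n"
  show ?thesis unfolding fun_eq_iff vadd_def smul_def zv_def
  proof
    fix i
    have "(x i + (p - 1) * x i mod p) mod p = (x i + (p - 1) * x i) mod p" by (simp add: mod_add_right_eq)
    also have "x i + (p - 1) * x i = p * x i" using a by (cases p) auto
    finally show "(x i + (p - 1) * x i mod p) mod p = 0" by simp
  qed
qed

lemma vadd_neg': "0 < p \<Longrightarrow> x \<in> Fv p n \<Longrightarrow> vadd p x (smul p (p - Suc 0) x) = zv"
proof -
  assume a: "0 < p" "x \<in> Fv p n"
  show ?thesis using vadd_neg[OF a] by (simp only: One_nat_def)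
qed

lemma transl_bij: assumes "0 < p" "x \<in> Fv p n"
  shows "bij_betw (\<lambda>y. vadd p y x) (Fv p n) (Fv p n)"
proof (rule bij_betwI[where g = "\<lambda>y. vadd p y (smul p (p - 1) x)"])
  show "(\<lambda>y. vadd p y x) \<in> Fv p n \<rightarrow> Fv p n" using assms vadd_Fv by auto
  show "(\<lambda>y. vadd p y (smul p (p - 1) x)) \<in> Fv p n \<rightarrow> Fv p n" using assms vadd_Fv smul_Fv by auto
  fix y assume y: "y \<in> Fv p n"
  show "vadd p (vadd p y x) (smul p (p - 1) x) = y"
    using assms y by (simp add: vadd_assoc vadd_neg' vadd_zv)
  have "vadd p (smul p (p - 1) x) x = zv" using vadd_neg[OF assms] vadd_comm by metis
  then show "vadd p (vadd p y (smul p (p - 1) x)) x = y"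
    using assms y by (simp add: vadd_assoc vadd_zv)
qed

lemma sum_transl: assumes "0 < p" "x \<in> Fv p n"
  shows "(\<Sum>y\<in>Fv p n. h (vadd p y x)) = (\<Sum>y\<in>Fv p n. h y)"
  using sum.reindex_bij_betw[OF transl_bij[OF assms], of h] .

lemma smul_bij: assumes "0 < p" "(s' * s) mod p = 1"
  shows "bij_betw (smul p s) (Fv p n) (Fv p n)"
proof (rule bij_betwI[where g = "smul p s'"])
  show "smul p s \<in> Fv p n \<rightarrow> Fv p n" using assms smul_Fv by auto
  show "smul p s' \<in> Fv p n \<rightarrow> Fv p n" using assms smul_Fv by auto
  fix y assume y: "y \<in> Fv p n"
  show "smul p s' (smul p s y) = y" using assms y by (simp add: smul_mult smul_one)
  show "smul p s (smul p s' y) = y" using assms y by (simp add: smul_mult smul_one mult.commute)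
qed

lemma sum_smul_transl: assumes "0 < p" "(s' * s) mod p = 1" "m \<in> Fv p n"
  shows "(\<Sum>d\<in>Fv p n. h (vadd p m (smul p s d))) = (\<Sum>y\<in>Fv p n. h y)"
proof -
  have "(\<Sum>d\<in>Fv p n. h (vadd p m (smul p s d))) = (\<Sum>d\<in>Fv p n. h (vadd p d m))"
    using sum.reindex_bij_betw[OF smul_bij[OF assms(1,2)], of "\<lambda>d. h (vadd p m d)"]
    by (simp add: vadd_comm)
  also have "\<dots> = (\<Sum>y\<in>Fv p n. h y)" by (rule sum_transl[OF assms(1,3)])
  finally show ?thesis .
qed

lemma w_pow_p: "0 < p \<Longrightarrow> exp (2 * pi * \<i> / of_nat p) ^ p = 1"
proof -
  assume "0 < p"
  have "exp (2 * pi * \<i> / of_nat p) ^ p = exp (of_nat p * (2 * pi * \<i> / of_nat p))"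
    by (rule exp_of_nat_mult[symmetric])
  also have "of_nat p * (2 * pi * \<i> / of_nat p) = 2 * of_real pi * \<i>" using \<open>0 < p\<close> by simp
  also have "exp (2 * of_real pi * \<i>) = 1" by (rule exp_two_pi_i)
  finally show ?thesis .
qed

lemma w_pow_mod: "0 < p \<Longrightarrow> exp (2 * pi * \<i> / of_nat p) ^ x = exp (2 * pi * \<i> / of_nat p) ^ (x mod p)"
proof -
  assume "0 < p"
  have "x = p * (x div p) + x mod p" by simp
  hence "exp (2 * pi * \<i> / of_nat p) ^ x = (exp (2 * pi * \<i> / of_nat p) ^ p) ^ (x div p) * exp (2 * pi * \<i> / of_nat p) ^ (x mod p)"
    by (metis power_add power_mult)
  thus ?thesis using w_pow_p[OF \<open>0 < p\<close>] by simp
qed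

lemma w_cong: "0 < p \<Longrightarrow> x mod p = y mod p \<Longrightarrow> exp (2 * pi * \<i> / of_nat p) ^ x = exp (2 * pi * \<i> / of_nat p) ^ y"
  by (metis w_pow_mod)

lemma norm_w: "norm (exp (2 * pi * \<i> / of_nat p) ^ x) = 1"
  by (simp add: norm_power)

lemma norm_chi[simp]: "norm (chi p n a m) = 1" unfolding chi_def by (rule norm_w)

lemma dotp_comm: "dotp n a m = dotp n m a" by (simp add: dotp_def mult.commute)
lemma chi_comm: "chi p n a m = chi p n m a" by (simp add: chi_def dotp_comm)

lemma dotp_vadd_mod: "dotp n a (vadd p x y) mod p = (dotp n a x + dotp n a y) mod p"
proof -
  have "dotp n a (vadd p x y) mod p = (\<Sum>i<n. a i * ((x i + y i) mod p) mod p) mod p"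
    by (simp add: dotp_def vadd_def mod_sum_eq)
  also have "\<dots> = (\<Sum>i<n. a i * (x i + y i) mod p) mod p" by (simp add: mod_mult_right_eq)
  also have "\<dots> = (\<Sum>i<n. a i * (x i + y i)) mod p" by (simp add: mod_sum_eq)
  also have "\<dots> = (dotp n a x + dotp n a y) mod p" by (simp add: dotp_def distrib_left sum.distrib)
  finally show ?thesis .
qed

lemma chi_vadd: "0 < p \<Longrightarrow> chi p n a (vadd p x y) = chi p n a x * chi p n a y"
  unfolding chi_def by (subst w_cong[OF _ dotp_vadd_mod]) (auto simp: power_add)

lemma chi_vadd1: "0 < p \<Longrightarrow> chi p n (vadd p x y) a = chi p n x a * chi p n y a"
  by (simp add: chi_comm chi_vadd)

lemma dotp_smul_mod: "dotp n a (smul p s x) mod p = dotp n (smul p s a) x mod p"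
proof -
  have "dotp n a (smul p s x) mod p = (\<Sum>i<n. a i * ((s * x i) mod p) mod p) mod p"
    by (simp add: dotp_def smul_def mod_sum_eq)
  also have "\<dots> = (\<Sum>i<n. (s * a i) * x i mod p) mod p"
    by (simp add: mod_mult_right_eq mult.left_commute mult.assoc)
  also have "\<dots> = (\<Sum>i<n. ((s * a i) mod p) * x i mod p) mod p"
    by (simp add: mod_mult_left_eq)
  also have "\<dots> = dotp n (smul p s a) x mod p" by (simp add: dotp_def smul_def mod_sum_eq)
  finally show ?thesis .
qed

lemma chi_smul: "0 < p \<Longrightarrow> chi p n a (smul p s x) = chi p n (smul p s a) x"
  unfolding chi_def by (rule w_cong[OF _ dotp_smul_mod])

lemma chi_zv[simp]: "chi p n a zv = 1" by (simp add: chi_def dotp_def zv_def)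
lemma chi_zv1[simp]: "chi p n zv a = 1" by (simp add: chi_def dotp_def zv_def)

lemma cnj_chi: assumes "0 < p" "a \<in> Fv p n"
  shows "cnj (chi p n a m) = chi p n (smul p (p - 1) a) m"
proof -
  have "chi p n a m * chi p n (smul p (p - 1) a) m = 1"
    using assms by (simp add: chi_vadd1[symmetric] vadd_neg')
  moreover have "chi p n a m * cnj (chi p n a m) = 1"
    using norm_chi[of p n a m] by (metis complex_norm_square mult_cancel_right1 norm_chi of_real_1 one_power2)
  ultimately show ?thesis by (metis mult.left_commute mult.right_neutral mult.commute)
qed


lemma w_ne1: assumes "0 < j" "j < p" shows "exp (2 * pi * \<i> / of_nat p) ^ j \<noteq> 1"
proof
  assume h: "exp (2 * pi * \<i> / of_nat p) ^ j = 1"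
  have "exp (of_nat j * (2 * pi * \<i> / of_nat p)) = 1" using h by (metis exp_of_nat_mult)
  then obtain z :: int where z: "Im (of_nat j * (2 * pi * \<i> / of_nat p)) = of_int (2 * z) * pi"
    by (auto simp: exp_eq_1)
  have "Im (of_nat j * (2 * pi * \<i> / of_nat p)) = 2 * pi * j / p" by simp
  with z have "2 * pi * j / p = 2 * z * pi" by simp
  hence "real j = real_of_int z * p" using assms by (simp add: field_simps)
  hence "int j = z * int p" by (metis of_int_eq_iff of_int_mult of_int_of_nat_eq)
  have "z \<ge> 1"
  proof (rule ccontr)
    assume "\<not> z \<ge> 1"
    hence "z * int p \<le> 0" by (simp add: mult_nonpos_nonneg)
    thus False using \<open>int j = z * int p\<close> assms by simp
  qed
  hence "z * int p \<ge> int p" using mult_right_mono[of 1 z "int p"] by simp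
  with \<open>int j = z * int p\<close> assms show False by simp
qed

lemma chi_sum: assumes "1 < p" "c \<in> Fv p n"
  shows "(\<Sum>u\<in>Fv p n. chi p n c u) = (if c = zv then of_nat (card (Fv p n)) else 0)"
proof (cases "c = zv")
  case True thus ?thesis by simp
next
  case False
  then obtain i where ci: "c i \<noteq> 0" by (auto simp: zv_def fun_eq_iff)
  have "i < n"
  proof (rule ccontr)
    assume "\<not> i < n"
    hence "c i = 0" using assms(2) unfolding Fv_def by simp
    thus False using ci by simp
  qed
  have cip: "c i < p" using assms \<open>i < n\<close> by (auto simp: Fv_def)
  define e where "e = (\<lambda>j. if j = i then 1 else (0::nat))"
  have eF: "e \<in> Fv p n" using assms \<open>i < n\<close> by (auto simp: Fv_def e_def)
  have "dotp n c e = (\<Sum>ia<n. if ia = i then c ia else 0)"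
    unfolding dotp_def e_def by (intro sum.cong) auto
  hence "dotp n c e = c i" using \<open>i < n\<close> by simp
  hence ce: "chi p n c e \<noteq> 1" unfolding chi_def using w_ne1[of "c i" p] ci cip by simp
  have "(\<Sum>u\<in>Fv p n. chi p n c u) = (\<Sum>u\<in>Fv p n. chi p n c (vadd p u e))"
    using sum_transl[of p e n "chi p n c"] assms eF by simp
  also have "\<dots> = (\<Sum>u\<in>Fv p n. chi p n c u) * chi p n c e"
    using assms by (simp add: chi_vadd sum_distrib_right)
  finally have "(\<Sum>u\<in>Fv p n. chi p n c u) * (1 - chi p n c e) = 0" by (simp add: algebra_simps)
  with ce False show ?thesis by simp
qed

lemma vadd_neg_eq: assumes "0 < p" "a \<in> Fv p n" "b \<in> Fv p n"
  shows "vadd p a (smul p (p - 1) b) = zv \<longleftrightarrow> a = b"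
proof
  assume h: "vadd p a (smul p (p - 1) b) = zv"
  have "a = vadd p a zv" using assms by (simp add: vadd_zv)
  also have "zv = vadd p (smul p (p - 1) b) b" using vadd_neg[OF assms(1,3)] vadd_comm by metis
  also have "vadd p a (vadd p (smul p (p - 1) b) b) = vadd p zv b" using h by (simp add: vadd_assoc[symmetric])
  also have "\<dots> = b" using assms by (metis vadd_comm vadd_zv)
  finally show "a = b" .
qed (use vadd_neg assms in auto)

lemma chi_orth: assumes "1 < p" "a \<in> Fv p n" "b \<in> Fv p n"
  shows "(\<Sum>u\<in>Fv p n. chi p n a u * cnj (chi p n b u)) = (if a = b then of_nat (card (Fv p n)) else 0)"
proof -
  have "(\<Sum>u\<in>Fv p n. chi p n a u * cnj (chi p n b u)) = (\<Sum>u\<in>Fv p n. chi p n (vadd p a (smul p (p - 1) b)) u)"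
    using assms by (simp add: cnj_chi chi_vadd1)
  also have "\<dots> = (if a = b then of_nat (card (Fv p n)) else 0)"
    using chi_sum[of p "vadd p a (smul p (p - 1) b)" n] assms vadd_neg_eq[of p a n b]
    by (simp add: vadd_Fv smul_Fv)
  finally show ?thesis .
qed

lemma fhat_chi: "fhat p n h a = (\<Sum>x\<in>Fv p n. h x * chi p n a x)"
  by (simp add: fhat_def chi_def)

definition proj :: "nat \<Rightarrow> nat \<Rightarrow> (nat \<Rightarrow> nat) set \<Rightarrow> ((nat \<Rightarrow> nat) \<Rightarrow> complex) \<Rightarrow> (nat \<Rightarrow> nat) \<Rightarrow> complex" where
  "proj p n A h m = (\<Sum>a\<in>A. fhat p n h a * cnj (chi p n a m)) / of_nat (card (Fv p n))"

lemma inversion: assumes "1 < p" "m \<in> Fv p n"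
  shows "proj p n (Fv p n) h m = h m"
proof -
  have fin: "finite (Fv p n)" using Fv_card assms by auto
  have N0: "card (Fv p n) > 0" using Fv_card[of p n] assms by simp
  have "(\<Sum>a\<in>Fv p n. fhat p n h a * cnj (chi p n a m))
      = (\<Sum>a\<in>Fv p n. \<Sum>x\<in>Fv p n. h x * chi p n a x * cnj (chi p n a m))"
    by (simp add: fhat_chi sum_distrib_right)
  also have "\<dots> = (\<Sum>a\<in>Fv p n. \<Sum>x\<in>Fv p n. h x * (chi p n x a * cnj (chi p n m a)))"
    by (intro sum.cong refl) (metis chi_comm mult.assoc)
  also have "\<dots> = (\<Sum>x\<in>Fv p n. \<Sum>a\<in>Fv p n. h x * (chi p n x a * cnj (chi p n m a)))"
    by (rule sum.swap)
  also have "\<dots> = (\<Sum>x\<in>Fv p n. h x * (\<Sum>a\<in>Fv p n. chi p n x a * cnj (chi p n m a)))"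
    by (simp add: sum_distrib_left)
  also have "\<dots> = (\<Sum>x\<in>Fv p n. h x * (if x = m then of_nat (card (Fv p n)) else 0))"
    using assms by (intro sum.cong refl) (simp add: chi_orth)
  also have "\<dots> = h m * of_nat (card (Fv p n))"
    using assms fin by (simp add: if_distrib sum.delta' cong: if_cong)
  finally show ?thesis using N0 by (simp add: proj_def)
qed

lemma proj_split: assumes "1 < p" "m \<in> Fv p n" "S \<union> T = Fv p n" "S \<inter> T = {}"
  shows "h m = proj p n S h m + proj p n T h m"
proof -
  have fin: "finite (Fv p n)" using Fv_card assms by auto
  have "finite S" "finite T" using fin assms by (metis finite_Un)+
  hence "(\<Sum>a\<in>S \<union> T. fhat p n h a * cnj (chi p n a m)) = (\<Sum>a\<in>S. fhat p n h a * cnj (chi p n a m)) + (\<Sum>a\<in>T. fhat p n h a * cnj (chi p n a m))"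
    using assms(4) by (rule sum.union_disjoint)
  hence "proj p n (S \<union> T) h m = proj p n S h m + proj p n T h m"
    by (simp add: proj_def add_divide_distrib)
  thus ?thesis using inversion[OF assms(1,2)] assms by simp
qed

lemma swap3: "(\<Sum>m\<in>M. \<Sum>a\<in>A. \<Sum>b\<in>B. F m a b) = (\<Sum>a\<in>A. \<Sum>b\<in>B. \<Sum>m\<in>M. F m a b)"
proof -
  have "(\<Sum>m\<in>M. \<Sum>a\<in>A. \<Sum>b\<in>B. F m a b) = (\<Sum>a\<in>A. \<Sum>m\<in>M. \<Sum>b\<in>B. F m a b)" by (rule sum.swap)
  also have "\<dots> = (\<Sum>a\<in>A. \<Sum>b\<in>B. \<Sum>m\<in>M. F m a b)" by (rule sum.cong[OF refl], rule sum.swap)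
  finally show ?thesis .
qed

lemma parseval_proj: assumes "1 < p" "A \<subseteq> Fv p n"
  shows "(\<Sum>m\<in>Fv p n. (cmod (proj p n A h m))\<^sup>2) = (\<Sum>a\<in>A. (cmod (fhat p n h a))\<^sup>2) / real (card (Fv p n))"
proof -
  let ?N = "card (Fv p n)"
  let ?H = "fhat p n h"
  have fin: "finite (Fv p n)" using Fv_card assms by auto
  have finA: "finite A" using fin assms finite_subset by auto
  have N0: "?N > 0" using Fv_card[of p n] assms by simp
  have e1: "proj p n A h m * cnj (proj p n A h m) =
     (\<Sum>a\<in>A. \<Sum>b\<in>A. (?H a * cnj (chi p n a m)) * cnj (?H b * cnj (chi p n b m))) / (of_nat ?N)^2" for m
    by (simp add: proj_def sum_product cnj_sum power2_eq_square)
  have e2: "(?H a * cnj (chi p n a m)) * cnj (?H b * cnj (chi p n b m)) = ?H a * cnj (?H b) * (chi p n b m * cnj (chi p n a m))" for a b m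
    by simp
  have "complex_of_real (\<Sum>m\<in>Fv p n. (cmod (proj p n A h m))\<^sup>2)
      = (\<Sum>m\<in>Fv p n. proj p n A h m * cnj (proj p n A h m))"
    by (simp only: of_real_sum complex_norm_square)
  also have "\<dots> = (\<Sum>m\<in>Fv p n. \<Sum>a\<in>A. \<Sum>b\<in>A. ?H a * cnj (?H b) * (chi p n b m * cnj (chi p n a m))) / (of_nat ?N)^2"
    by (simp only: e1 e2 sum_divide_distrib)
  also have "(\<Sum>m\<in>Fv p n. \<Sum>a\<in>A. \<Sum>b\<in>A. ?H a * cnj (?H b) * (chi p n b m * cnj (chi p n a m)))
     = (\<Sum>a\<in>A. \<Sum>b\<in>A. \<Sum>m\<in>Fv p n. ?H a * cnj (?H b) * (chi p n b m * cnj (chi p n a m)))"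
    by (rule swap3)
  also have "\<dots> = (\<Sum>a\<in>A. \<Sum>b\<in>A. ?H a * cnj (?H b) * (\<Sum>m\<in>Fv p n. chi p n b m * cnj (chi p n a m)))"
    by (simp only: sum_distrib_left)
  also have "\<dots> = (\<Sum>a\<in>A. \<Sum>b\<in>A. ?H a * cnj (?H b) * (if b = a then of_nat ?N else 0))"
  proof (intro sum.cong refl)
    fix a b assume "a \<in> A" "b \<in> A"
    hence "b \<in> Fv p n" "a \<in> Fv p n" using assms by auto
    hence "(\<Sum>m\<in>Fv p n. chi p n b m * cnj (chi p n a m)) = (if b = a then of_nat ?N else 0)"
      by (rule chi_orth[OF assms(1)])
    thus "?H a * cnj (?H b) * (\<Sum>m\<in>Fv p n. chi p n b m * cnj (chi p n a m)) = ?H a * cnj (?H b) * (if b = a then of_nat ?N else 0)"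
      by simp
  qed
  also have "\<dots> = (\<Sum>a\<in>A. ?H a * cnj (?H a) * of_nat ?N)"
    using finA by (simp add: if_distrib sum.delta cong: if_cong)
  also have "\<dots> = complex_of_real (\<Sum>a\<in>A. (cmod (?H a))\<^sup>2) * of_nat ?N"
  proof -
    have hh: "?H a * cnj (?H a) = complex_of_real ((cmod (?H a))\<^sup>2)" for a by (rule complex_norm_square[symmetric])
    show ?thesis by (simp only: hh sum_distrib_right[symmetric] of_real_sum)
  qed
  also have "\<dots> / (of_nat ?N)^2 = complex_of_real ((\<Sum>a\<in>A. (cmod (?H a))\<^sup>2) / real ?N)"
    using N0 by (simp add: power2_eq_square del: of_real_sum)
  finally show ?thesis using of_real_eq_iff by blast
qed


lemma amgm: assumes "(e::real) > 0" shows "a * b \<le> (e * a\<^sup>2 + b\<^sup>2 / e) / 2"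
proof -
  have "0 \<le> (e * a - b)\<^sup>2 / e" using assms by simp
  also have "(e * a - b)\<^sup>2 / e = e * a\<^sup>2 + b\<^sup>2 / e - 2 * (a * b)"
    using assms by (simp add: power2_eq_square field_simps)
  finally show ?thesis by simp
qed

lemma err_bound:
  fixes g :: "(nat \<Rightarrow> nat) \<Rightarrow> real" and h1 h2 K :: "(nat \<Rightarrow> nat) \<Rightarrow> complex"
  assumes p1: "1 < p" and ss: "(s' * s) mod p = 1" and tt: "(t' * t) mod p = 1" and e: "e > 0"
    and g0: "\<forall>m\<in>Fv p n. 0 \<le> g m" and Kb: "\<forall>d. cmod (K d) \<le> c"
  shows "cmod (\<Sum>m\<in>Fv p n. \<Sum>d\<in>Fv p n. of_real (g m) * h1 (vadd p m (smul p s d)) * h2 (vadd p m (smul p t d)) * K d)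
     \<le> c * ((e * (\<Sum>m\<in>Fv p n. g m) * (\<Sum>y\<in>Fv p n. (cmod (h1 y))\<^sup>2) + (\<Sum>m\<in>Fv p n. g m) * (\<Sum>y\<in>Fv p n. (cmod (h2 y))\<^sup>2) / e) / 2)"
proof -
  let ?x1 = "\<lambda>m d. vadd p m (smul p s d)" and ?x2 = "\<lambda>m d. vadd p m (smul p t d)"
  let ?A1 = "\<Sum>y\<in>Fv p n. (cmod (h1 y))\<^sup>2" and ?A2 = "\<Sum>y\<in>Fv p n. (cmod (h2 y))\<^sup>2"
  have c0: "0 \<le> c" using Kb norm_ge_zero order_trans by blast
  have "cmod (\<Sum>m\<in>Fv p n. \<Sum>d\<in>Fv p n. of_real (g m) * h1 (?x1 m d) * h2 (?x2 m d) * K d)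
      \<le> (\<Sum>m\<in>Fv p n. \<Sum>d\<in>Fv p n. cmod (of_real (g m) * h1 (?x1 m d) * h2 (?x2 m d) * K d))"
    by (rule order_trans[OF norm_sum sum_mono[OF norm_sum]])
  also have "\<dots> \<le> (\<Sum>m\<in>Fv p n. \<Sum>d\<in>Fv p n. c * (g m * ((e * (cmod (h1 (?x1 m d)))\<^sup>2 + (cmod (h2 (?x2 m d)))\<^sup>2 / e) / 2)))"
  proof (intro sum_mono)
    fix m d assume m: "m \<in> Fv p n"
    have gm: "0 \<le> g m" using g0 m by auto
    have "cmod (of_real (g m) * h1 (?x1 m d) * h2 (?x2 m d) * K d) = g m * (cmod (h1 (?x1 m d)) * cmod (h2 (?x2 m d))) * cmod (K d)"
      using gm by (simp add: norm_mult)
    also have "\<dots> \<le> g m * ((e * (cmod (h1 (?x1 m d)))\<^sup>2 + (cmod (h2 (?x2 m d)))\<^sup>2 / e) / 2) * c"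
      by (intro mult_mono mult_left_mono amgm e gm Kb[rule_format]) (use gm e in auto)
    finally show "cmod (of_real (g m) * h1 (?x1 m d) * h2 (?x2 m d) * K d) \<le> c * (g m * ((e * (cmod (h1 (?x1 m d)))\<^sup>2 + (cmod (h2 (?x2 m d)))\<^sup>2 / e) / 2))"
      by (simp add: mult_ac)
  qed
  also have "\<dots> = (\<Sum>m\<in>Fv p n. c * (g m * ((e * ?A1 + ?A2 / e) / 2)))"
  proof (intro sum.cong refl)
    fix m assume m: "m \<in> Fv p n"
    have s1: "(\<Sum>d\<in>Fv p n. (cmod (h1 (?x1 m d)))\<^sup>2) = ?A1"
      by (rule sum_smul_transl[OF _ ss m]) (use p1 in simp)
    have s2: "(\<Sum>d\<in>Fv p n. (cmod (h2 (?x2 m d)))\<^sup>2) = ?A2"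
      by (rule sum_smul_transl[OF _ tt m]) (use p1 in simp)
    have "(\<Sum>d\<in>Fv p n. c * (g m * ((e * (cmod (h1 (?x1 m d)))\<^sup>2 + (cmod (h2 (?x2 m d)))\<^sup>2 / e) / 2)))
       = c * (g m * ((e * (\<Sum>d\<in>Fv p n. (cmod (h1 (?x1 m d)))\<^sup>2) + (\<Sum>d\<in>Fv p n. (cmod (h2 (?x2 m d)))\<^sup>2) / e) / 2))"
    proof -
      let ?X = "\<lambda>d. (cmod (h1 (?x1 m d)))\<^sup>2" and ?Y = "\<lambda>d. (cmod (h2 (?x2 m d)))\<^sup>2"
      have "(\<Sum>d\<in>Fv p n. c * (g m * ((e * ?X d + ?Y d / e) / 2))) = (\<Sum>d\<in>Fv p n. (c * g m * e / 2) * ?X d + (c * g m / (2 * e)) * ?Y d)"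
        by (intro sum.cong refl) (use e in \<open>simp add: field_simps\<close>)
      also have "\<dots> = (c * g m * e / 2) * (\<Sum>d\<in>Fv p n. ?X d) + (c * g m / (2 * e)) * (\<Sum>d\<in>Fv p n. ?Y d)"
        by (simp add: sum.distrib sum_distrib_left)
      also have "\<dots> = c * (g m * ((e * (\<Sum>d\<in>Fv p n. ?X d) + (\<Sum>d\<in>Fv p n. ?Y d) / e) / 2))"
        using e by (simp add: field_simps)
      finally show ?thesis .
    qed
    thus "(\<Sum>d\<in>Fv p n. c * (g m * ((e * (cmod (h1 (?x1 m d)))\<^sup>2 + (cmod (h2 (?x2 m d)))\<^sup>2 / e) / 2)))
       = c * (g m * ((e * ?A1 + ?A2 / e) / 2))" by (simp only: s1 s2)
  qed
  also have "\<dots> = c * ((e * (\<Sum>m\<in>Fv p n. g m) * ?A1 + (\<Sum>m\<in>Fv p n. g m) * ?A2 / e) / 2)"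
  proof -
    have gen: "\<And>K. (\<Sum>m\<in>Fv p n. c * (g m * K)) = c * K * (\<Sum>m\<in>Fv p n. g m)"
      by (simp add: sum_distrib_left sum_distrib_right mult_ac)
    have gen2: "\<And>X Y Z::real. c * ((e * X + Y / e) / 2) * Z = c * ((e * Z * X + Z * Y / e) / 2)"
      by (simp add: algebra_simps)
    show ?thesis by (simp only: gen gen2)
  qed
  finally show ?thesis .
qed


lemma cnj_chi_shift: assumes "0 < p"
  shows "cnj (chi p n a (vadd p m (smul p s d))) = cnj (chi p n a m) * cnj (chi p n (smul p s a) d)"
  using assms by (simp add: chi_vadd chi_smul)

lemma proj_prod:
  assumes p1: "1 < p"
  shows "proj p n S h (vadd p m (smul p s d)) * proj p n S h (vadd p m (smul p t d)) =
    (\<Sum>a\<in>S. \<Sum>b\<in>S. fhat p n h a * fhat p n h b * cnj (chi p n a m) * cnj (chi p n b m)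
        * cnj (chi p n (vadd p (smul p s a) (smul p t b)) d)) / (of_nat (card (Fv p n)))\<^sup>2"
proof -
  have p0: "0 < p" using p1 by simp
  have e: "fhat p n h a * cnj (chi p n a (vadd p m (smul p s d))) * (fhat p n h b * cnj (chi p n b (vadd p m (smul p t d))))
     = fhat p n h a * fhat p n h b * cnj (chi p n a m) * cnj (chi p n b m) * cnj (chi p n (vadd p (smul p s a) (smul p t b)) d)" for a b
    using p0 by (simp add: cnj_chi_shift chi_vadd1 mult_ac)
  show ?thesis
    by (simp add: proj_def sum_product e power2_eq_square)
qed

lemma K_orth:
  assumes p1: "1 < p" and D: "D \<subseteq> Fv p n" and c: "c \<in> D"
  shows "(\<Sum>d\<in>Fv p n. cnj (chi p n c d) * (\<Sum>l\<in>D. chi p n l d)) = of_nat (card (Fv p n))"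
proof -
  have fin: "finite (Fv p n)" using Fv_card p1 by auto
  hence finD: "finite D" using D finite_subset by auto
  have "(\<Sum>d\<in>Fv p n. cnj (chi p n c d) * (\<Sum>l\<in>D. chi p n l d)) = (\<Sum>d\<in>Fv p n. \<Sum>l\<in>D. chi p n l d * cnj (chi p n c d))"
    by (simp add: sum_distrib_left mult_ac)
  also have "\<dots> = (\<Sum>l\<in>D. \<Sum>d\<in>Fv p n. chi p n l d * cnj (chi p n c d))" by (rule sum.swap)
  also have "\<dots> = (\<Sum>l\<in>D. if l = c then of_nat (card (Fv p n)) else 0)"
  proof (intro sum.cong refl)
    fix l assume "l \<in> D"
    hence "l \<in> Fv p n" "c \<in> Fv p n" using D c by auto
    thus "(\<Sum>d\<in>Fv p n. chi p n l d * cnj (chi p n c d)) = (if l = c then of_nat (card (Fv p n)) else 0)"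
      by (rule chi_orth[OF p1])
  qed
  also have "\<dots> = of_nat (card (Fv p n))" using finD c by (simp add: sum.delta')
  finally show ?thesis .
qed

lemma ss_identity:
  fixes g :: "(nat \<Rightarrow> nat) \<Rightarrow> real"
  assumes p1: "1 < p" and S: "S \<subseteq> Fv p n"
    and Ddef: "D = (\<lambda>(a, b). vadd p (smul p s a) (smul p t b)) ` (S \<times> S)"
  shows "(\<Sum>m\<in>Fv p n. \<Sum>d\<in>Fv p n. of_real (g m) * proj p n S h (vadd p m (smul p s d)) * proj p n S h (vadd p m (smul p t d)) * (\<Sum>l\<in>D. chi p n l d))
     = of_nat (card (Fv p n)) * (\<Sum>m\<in>Fv p n. of_real (g m) * (proj p n S h m)\<^sup>2)"
proof -
  have p0: "0 < p" using p1 by simp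
  let ?N = "of_nat (card (Fv p n)) :: complex"
  have N0: "?N \<noteq> 0" using Fv_card[OF p0] p0 by simp
  let ?H = "fhat p n h"
  let ?c = "\<lambda>a b. vadd p (smul p s a) (smul p t b)"
  let ?Y = "\<lambda>m a b. ?H a * ?H b * cnj (chi p n a m) * cnj (chi p n b m)"
  let ?K = "\<lambda>d. \<Sum>l\<in>D. chi p n l d"
  have DF: "D \<subseteq> Fv p n" using S p0 unfolding Ddef by (auto intro!: vadd_Fv smul_Fv)
  have cD: "?c a b \<in> D" if "a \<in> S" "b \<in> S" for a b using that unfolding Ddef by auto
  have "(\<Sum>m\<in>Fv p n. \<Sum>d\<in>Fv p n. of_real (g m) * proj p n S h (vadd p m (smul p s d)) * proj p n S h (vadd p m (smul p t d)) * ?K d)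
     = (\<Sum>m\<in>Fv p n. \<Sum>d\<in>Fv p n. \<Sum>a\<in>S. \<Sum>b\<in>S. (of_real (g m) / ?N\<^sup>2 * ?Y m a b) * (cnj (chi p n (?c a b) d) * ?K d))"
  proof (intro sum.cong refl)
    fix m d
    have "of_real (g m) * proj p n S h (vadd p m (smul p s d)) * proj p n S h (vadd p m (smul p t d)) * ?K d
      = of_real (g m) * (proj p n S h (vadd p m (smul p s d)) * proj p n S h (vadd p m (smul p t d))) * ?K d"
      by (simp add: mult_ac)
    also have "\<dots> = of_real (g m) * ((\<Sum>a\<in>S. \<Sum>b\<in>S. ?Y m a b * cnj (chi p n (?c a b) d)) / ?N\<^sup>2) * ?K d"
      by (simp only: proj_prod[OF p1])
    also have "\<dots> = (\<Sum>a\<in>S. \<Sum>b\<in>S. (of_real (g m) / ?N\<^sup>2 * ?Y m a b) * (cnj (chi p n (?c a b) d) * ?K d))"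
      by (simp add: sum_distrib_left sum_distrib_right sum_divide_distrib mult_ac)
    finally show "of_real (g m) * proj p n S h (vadd p m (smul p s d)) * proj p n S h (vadd p m (smul p t d)) * ?K d
      = (\<Sum>a\<in>S. \<Sum>b\<in>S. (of_real (g m) / ?N\<^sup>2 * ?Y m a b) * (cnj (chi p n (?c a b) d) * ?K d))" .
  qed
  also have "\<dots> = (\<Sum>m\<in>Fv p n. \<Sum>a\<in>S. \<Sum>b\<in>S. \<Sum>d\<in>Fv p n. (of_real (g m) / ?N\<^sup>2 * ?Y m a b) * (cnj (chi p n (?c a b) d) * ?K d))"
    by (rule sum.cong[OF refl], rule swap3)
  also have "\<dots> = (\<Sum>m\<in>Fv p n. \<Sum>a\<in>S. \<Sum>b\<in>S. (of_real (g m) / ?N\<^sup>2 * ?Y m a b) * ?N)"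
  proof (intro sum.cong refl)
    fix m a b assume "a \<in> S" "b \<in> S"
    hence X: "(\<Sum>d\<in>Fv p n. cnj (chi p n (?c a b) d) * ?K d) = ?N" by (intro K_orth[OF p1 DF] cD)
    have "(\<Sum>d\<in>Fv p n. (of_real (g m) / ?N\<^sup>2 * ?Y m a b) * (cnj (chi p n (?c a b) d) * ?K d))
       = (of_real (g m) / ?N\<^sup>2 * ?Y m a b) * (\<Sum>d\<in>Fv p n. cnj (chi p n (?c a b) d) * ?K d)"
      by (rule sum_distrib_left[symmetric])
    also have "\<dots> = (of_real (g m) / ?N\<^sup>2 * ?Y m a b) * ?N" by (simp only: X)
    finally show "(\<Sum>d\<in>Fv p n. (of_real (g m) / ?N\<^sup>2 * ?Y m a b) * (cnj (chi p n (?c a b) d) * ?K d)) = (of_real (g m) / ?N\<^sup>2 * ?Y m a b) * ?N" .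
  qed
  also have "\<dots> = ?N * (\<Sum>m\<in>Fv p n. of_real (g m) * (proj p n S h m)\<^sup>2)"
  proof -
    have sq: "(proj p n S h m)\<^sup>2 = (\<Sum>a\<in>S. \<Sum>b\<in>S. ?Y m a b) / ?N\<^sup>2" for m
      by (simp add: proj_def power2_eq_square sum_product mult_ac)
    have inner: "(\<Sum>a\<in>S. \<Sum>b\<in>S. (of_real (g m) / ?N\<^sup>2 * ?Y m a b) * ?N)
       = (of_real (g m) / ?N\<^sup>2 * ?N) * (\<Sum>a\<in>S. \<Sum>b\<in>S. ?Y m a b)" for m
      by (simp add: sum_distrib_left mult_ac)
    have gen: "\<And>Z x. x / ?N\<^sup>2 * ?N * Z = ?N * (x * (Z / ?N\<^sup>2))"
      by (simp add: times_divide_eq_right times_divide_eq_left mult_ac)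
    have "(\<Sum>m\<in>Fv p n. \<Sum>a\<in>S. \<Sum>b\<in>S. (of_real (g m) / ?N\<^sup>2 * ?Y m a b) * ?N)
        = (\<Sum>m\<in>Fv p n. ?N * (of_real (g m) * (proj p n S h m)\<^sup>2))"
      by (intro sum.cong refl) (simp only: inner gen sq)
    also have "\<dots> = ?N * (\<Sum>m\<in>Fv p n. of_real (g m) * (proj p n S h m)\<^sup>2)"
      by (rule sum_distrib_left[symmetric])
    finally show ?thesis .
  qed
  finally show ?thesis .
qed


lemma re_sq_bound:
  fixes f g :: real and z :: complex
  assumes "0 \<le> f" "f \<le> 1" "0 \<le> g" "g \<le> 1"
  shows "g * Re ((complex_of_real f - z)\<^sup>2) \<ge> g * f\<^sup>2 - 2 * (g * cmod z) - (cmod z)\<^sup>2"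
proof -
  have e: "Re ((complex_of_real f - z)\<^sup>2) = f\<^sup>2 - 2 * f * Re z + Re (z\<^sup>2)"
    by (simp add: power2_eq_square algebra_simps)
  have r1: "Re (z\<^sup>2) \<ge> - (cmod z)\<^sup>2"
    using abs_Re_le_cmod[of "z\<^sup>2"] by (simp add: norm_power)
  have r2: "f * Re z \<le> cmod z"
  proof -
    have "f * Re z \<le> f * cmod z" using assms(1) complex_Re_le_cmod mult_left_mono by blast
    also have "\<dots> \<le> 1 * cmod z" using assms(2) by (intro mult_right_mono) auto
    finally show ?thesis by simp
  qed
  have "Re ((complex_of_real f - z)\<^sup>2) \<ge> f\<^sup>2 - 2 * cmod z - (cmod z)\<^sup>2" using e r1 r2 by linarith
  hence "g * Re ((complex_of_real f - z)\<^sup>2) \<ge> g * (f\<^sup>2 - 2 * cmod z - (cmod z)\<^sup>2)"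
    using assms(3) by (simp add: mult_left_mono)
  moreover have "g * (cmod z)\<^sup>2 \<le> (cmod z)\<^sup>2" using assms(3,4) by (simp add: mult_left_le_one_le)
  ultimately show ?thesis by (simp add: algebra_simps)
qed

lemma core:
  fixes f g :: "(nat \<Rightarrow> nat) \<Rightarrow> real"
  assumes p1: "1 < p" and f01: "\<forall>m\<in>Fv p n. 0 \<le> f m \<and> f m \<le> 1" and g01: "\<forall>m\<in>Fv p n. 0 \<le> g m \<and> g m \<le> 1"
    and ST: "S \<union> T = Fv p n" "S \<inter> T = {}"
    and ss: "(s' * s) mod p = 1" and tt: "(t' * t) mod p = 1"
    and e1: "e1 > 0" and e2: "e2 > 0" and e3: "e3 > 0"
    and Ddef: "D = (\<lambda>(a, b). vadd p (smul p s a) (smul p t b)) ` (S \<times> S)"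
    and fTdef: "fT = proj p n T (\<lambda>x. complex_of_real (f x))"
    and Adef: "A = (\<Sum>m\<in>Fv p n. (cmod (fT m))\<^sup>2)"
    and Bdef: "B = (\<Sum>m\<in>Fv p n. (f m)\<^sup>2)"
    and Sgdef: "Sg = (\<Sum>m\<in>Fv p n. g m)"
  shows "real (card D) * (\<Sum>m\<in>Fv p n. \<Sum>d\<in>Fv p n. g m * f (vadd p m (smul p s d)) * f (vadd p m (smul p t d)))
     \<ge> real (card (Fv p n)) * ((\<Sum>m\<in>Fv p n. g m * (f m)\<^sup>2) - 2 * (\<Sum>m\<in>Fv p n. g m * cmod (fT m)) - A)
       - real (card D) * ((e1 * Sg * A + Sg * B / e1) / 2 + (e2 * Sg * B + Sg * A / e2) / 2 + (e3 * Sg * A + Sg * A / e3) / 2)"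
proof -
  have p0: "0 < p" using p1 by simp
  have fin: "finite (Fv p n)" using Fv_card[OF p0] by simp
  have SF: "S \<subseteq> Fv p n" using ST by auto
  have DF: "D \<subseteq> Fv p n" using SF p0 unfolding Ddef by (auto intro!: vadd_Fv smul_Fv)
  have finD: "finite D" using DF fin finite_subset by auto
  define fc where "fc = (\<lambda>x. complex_of_real (f x))"
  define fS where "fS = proj p n S fc"
  define K where "K = (\<lambda>d. \<Sum>l\<in>D. chi p n l d)"
  define x1 where "x1 = (\<lambda>m d. vadd p m (smul p s d))"
  define x2 where "x2 = (\<lambda>m d. vadd p m (smul p t d))"
  define Z where "Z = (\<lambda>h1 h2. \<Sum>m\<in>Fv p n. \<Sum>d\<in>Fv p n. complex_of_real (g m) * h1 (x1 m d) * h2 (x2 m d) * K d)"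
  define W where "W = (\<Sum>m\<in>Fv p n. \<Sum>d\<in>Fv p n. g m * f (x1 m d) * f (x2 m d))"
  define N where "N = real (card (Fv p n))"
  have x1F: "x1 m d \<in> Fv p n" if "m \<in> Fv p n" "d \<in> Fv p n" for m d
    using that p0 unfolding x1_def by (auto intro!: vadd_Fv smul_Fv)
  have x2F: "x2 m d \<in> Fv p n" if "m \<in> Fv p n" "d \<in> Fv p n" for m d
    using that p0 unfolding x2_def by (auto intro!: vadd_Fv smul_Fv)
  have split: "fc x = fS x + fT x" if "x \<in> Fv p n" for x
    unfolding fS_def fTdef fc_def using proj_split[OF p1 that ST] by simp
  have Kb: "\<forall>d. cmod (K d) \<le> real (card D)"
  proof
    fix d
    have "cmod (K d) \<le> (\<Sum>l\<in>D. cmod (chi p n l d))" unfolding K_def by (rule norm_sum)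
    thus "cmod (K d) \<le> real (card D)" by simp
  qed
  have g0: "\<forall>m\<in>Fv p n. 0 \<le> g m" using g01 by auto
  have i: "Re (Z fc fc) \<le> real (card D) * W"
  proof -
    have "Re (Z fc fc) = (\<Sum>m\<in>Fv p n. \<Sum>d\<in>Fv p n. Re (complex_of_real (g m * f (x1 m d) * f (x2 m d)) * K d))"
      unfolding Z_def fc_def by (simp add: Re_sum mult.assoc)
    also have "\<dots> \<le> (\<Sum>m\<in>Fv p n. \<Sum>d\<in>Fv p n. real (card D) * (g m * f (x1 m d) * f (x2 m d)))"
    proof (intro sum_mono)
      fix m d assume md: "m \<in> Fv p n" "d \<in> Fv p n"
      have r0: "0 \<le> g m * f (x1 m d) * f (x2 m d)" using g01 f01 md x1F x2F by auto
      have "Re (complex_of_real (g m * f (x1 m d) * f (x2 m d)) * K d) = (g m * f (x1 m d) * f (x2 m d)) * Re (K d)"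
        by simp
      also have "\<dots> \<le> (g m * f (x1 m d) * f (x2 m d)) * real (card D)"
        using r0 Kb complex_Re_le_cmod order_trans mult_left_mono by metis
      finally show "Re (complex_of_real (g m * f (x1 m d) * f (x2 m d)) * K d) \<le> real (card D) * (g m * f (x1 m d) * f (x2 m d))"
        by (simp add: mult_ac)
    qed
    also have "\<dots> = real (card D) * W" unfolding W_def by (simp add: sum_distrib_left)
    finally show ?thesis .
  qed
  have ii: "Z fc fc = Z fS fS + Z fT fc + Z fc fT - Z fT fT"
  proof -
    have "Z fc fc = (\<Sum>m\<in>Fv p n. \<Sum>d\<in>Fv p n.
        complex_of_real (g m) * fS (x1 m d) * fS (x2 m d) * K d + complex_of_real (g m) * fT (x1 m d) * fc (x2 m d) * K d
        + complex_of_real (g m) * fc (x1 m d) * fT (x2 m d) * K d - complex_of_real (g m) * fT (x1 m d) * fT (x2 m d) * K d)"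
      unfolding Z_def
    proof (intro sum.cong refl)
      fix m d assume md: "m \<in> Fv p n" "d \<in> Fv p n"
      have a1: "fS (x1 m d) = fc (x1 m d) - fT (x1 m d)" using split[OF x1F[OF md]] by simp
      have a2: "fS (x2 m d) = fc (x2 m d) - fT (x2 m d)" using split[OF x2F[OF md]] by simp
      show "complex_of_real (g m) * fc (x1 m d) * fc (x2 m d) * K d =
        complex_of_real (g m) * fS (x1 m d) * fS (x2 m d) * K d + complex_of_real (g m) * fT (x1 m d) * fc (x2 m d) * K d
        + complex_of_real (g m) * fc (x1 m d) * fT (x2 m d) * K d - complex_of_real (g m) * fT (x1 m d) * fT (x2 m d) * K d"
        unfolding a1 a2 by (simp add: algebra_simps)
    qed
    also have "\<dots> = Z fS fS + Z fT fc + Z fc fT - Z fT fT"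
      unfolding Z_def by (simp add: sum.distrib sum_subtractf)
    finally show ?thesis .
  qed
  have iii: "Z fS fS = complex_of_real N * (\<Sum>m\<in>Fv p n. complex_of_real (g m) * (fS m)\<^sup>2)"
    unfolding Z_def fS_def K_def x1_def x2_def N_def
    using ss_identity[OF p1 SF Ddef, of g fc] by simp
  have nfc: "(\<Sum>y\<in>Fv p n. (cmod (fc y))\<^sup>2) = B" unfolding Bdef fc_def by simp
  have iv1: "cmod (Z fT fc) \<le> real (card D) * ((e1 * Sg * A + Sg * B / e1) / 2)"
    using err_bound[OF p1 ss tt e1 g0 Kb, of fT fc] unfolding Z_def x1_def x2_def
    by (simp add: nfc Adef Sgdef)
  have iv2: "cmod (Z fc fT) \<le> real (card D) * ((e2 * Sg * B + Sg * A / e2) / 2)"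
    using err_bound[OF p1 ss tt e2 g0 Kb, of fc fT] unfolding Z_def x1_def x2_def
    by (simp add: nfc Adef Sgdef)
  have iv3: "cmod (Z fT fT) \<le> real (card D) * ((e3 * Sg * A + Sg * A / e3) / 2)"
    using err_bound[OF p1 ss tt e3 g0 Kb, of fT fT] unfolding Z_def x1_def x2_def
    by (simp add: Adef Sgdef)
  have v: "Re (\<Sum>m\<in>Fv p n. complex_of_real (g m) * (fS m)\<^sup>2) \<ge> (\<Sum>m\<in>Fv p n. g m * (f m)\<^sup>2) - 2 * (\<Sum>m\<in>Fv p n. g m * cmod (fT m)) - A"
  proof -
    have "(\<Sum>m\<in>Fv p n. g m * (f m)\<^sup>2 - 2 * (g m * cmod (fT m)) - (cmod (fT m))\<^sup>2)
        \<le> (\<Sum>m\<in>Fv p n. Re (complex_of_real (g m) * (fS m)\<^sup>2))"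
    proof (intro sum_mono)
      fix m assume m: "m \<in> Fv p n"
      have "fS m = complex_of_real (f m) - fT m" using split[OF m] unfolding fc_def by simp
      thus "g m * (f m)\<^sup>2 - 2 * (g m * cmod (fT m)) - (cmod (fT m))\<^sup>2 \<le> Re (complex_of_real (g m) * (fS m)\<^sup>2)"
        using re_sq_bound[of "f m" "g m" "fT m"] f01 g01 m by simp
    qed
    thus ?thesis unfolding Adef by (simp add: Re_sum sum_subtractf sum_distrib_left)
  qed
  have "Re (Z fc fc) = N * Re (\<Sum>m\<in>Fv p n. complex_of_real (g m) * (fS m)\<^sup>2) + Re (Z fT fc) + Re (Z fc fT) - Re (Z fT fT)"
    using ii iii by simp
  moreover have "Re (Z fT fc) \<ge> - cmod (Z fT fc)" "Re (Z fc fT) \<ge> - cmod (Z fc fT)" "- Re (Z fT fT) \<ge> - cmod (Z fT fT)"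
    using abs_Re_le_cmod by (smt (verit))+
  moreover have "N * Re (\<Sum>m\<in>Fv p n. complex_of_real (g m) * (fS m)\<^sup>2) \<ge> N * ((\<Sum>m\<in>Fv p n. g m * (f m)\<^sup>2) - 2 * (\<Sum>m\<in>Fv p n. g m * cmod (fT m)) - A)"
    using v unfolding N_def by (intro mult_left_mono) auto
  ultimately have "Re (Z fc fc) \<ge> N * ((\<Sum>m\<in>Fv p n. g m * (f m)\<^sup>2) - 2 * (\<Sum>m\<in>Fv p n. g m * cmod (fT m)) - A)
     - (real (card D) * ((e1 * Sg * A + Sg * B / e1) / 2) + real (card D) * ((e2 * Sg * B + Sg * A / e2) / 2) + real (card D) * ((e3 * Sg * A + Sg * A / e3) / 2))"
    using iv1 iv2 iv3 by linarith
  moreover have "real (card D) * ((e1 * Sg * A + Sg * B / e1) / 2 + (e2 * Sg * B + Sg * A / e2) / 2 + (e3 * Sg * A + Sg * A / e3) / 2)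
     = real (card D) * ((e1 * Sg * A + Sg * B / e1) / 2) + real (card D) * ((e2 * Sg * B + Sg * A / e2) / 2) + real (card D) * ((e3 * Sg * A + Sg * A / e3) / 2)"
    by (simp only: distrib_left)
  ultimately have "Re (Z fc fc) \<ge> N * ((\<Sum>m\<in>Fv p n. g m * (f m)\<^sup>2) - 2 * (\<Sum>m\<in>Fv p n. g m * cmod (fT m)) - A)
     - real (card D) * ((e1 * Sg * A + Sg * B / e1) / 2 + (e2 * Sg * B + Sg * A / e2) / 2 + (e3 * Sg * A + Sg * A / e3) / 2)"
    by linarith
  with i show ?thesis unfolding W_def x1_def x2_def N_def by linarith
qed


lemma numeric:
  fixes w X Y a b G \<beta> \<delta> Dc k p C :: real
  assumes k2: "k \<ge> 2" and p2: "p \<ge> 2" and C: "2 * C = k * (k - 1)"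
    and D1: "1 \<le> Dc" and Dk: "Dc \<le> k\<^sup>2"
    and b0: "0 < \<beta>" and bG: "\<beta> \<le> G" and G1: "G \<le> 1" and Gk: "8 / (p * k) \<le> G"
    and d0: "0 \<le> \<delta>" and a0: "0 \<le> a" and ad: "a \<le> \<delta>\<^sup>2" and bb0: "0 \<le> b" and b1: "b \<le> 1"
    and X: "G ^ 3 \<le> X" and w0: "0 \<le> w"
    and Yb: "\<And>t. t > 0 \<Longrightarrow> Y \<le> (t * G + a / t) / 2"
    and core: "\<And>e1 e2 e3. e1 > 0 \<Longrightarrow> e2 > 0 \<Longrightarrow> e3 > 0 \<Longrightarrow>
       Dc * w \<ge> X - 2 * Y - a - Dc * ((e1 * G * a + G * b / e1) / 2 + (e2 * G * b + G * a / e2) / 2 + (e3 * G * a + G * a / e3) / 2)"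
  shows "w \<ge> (1 / p\<^sup>2) * (1 / C) * \<beta> ^ 4 / 128 - 9 * \<delta> * \<beta>\<^sup>2 / 8"
proof -
  have C1: "C \<ge> 1"
  proof -
    have "k * (k - 1) \<ge> 2 * 1" using k2 by (intro mult_mono) auto
    thus ?thesis using C by simp
  qed
  have kk: "0 \<le> k * (k - 2)" using k2 by simp
  have kC: "k \<le> 2 * C" using C kk by (simp add: algebra_simps)
  have k4C: "k\<^sup>2 \<le> 4 * C" using C kk by (simp add: algebra_simps power2_eq_square)
  have pp: "p\<^sup>2 \<ge> 4" using p2 mult_mono[of 2 p 2 p] by (simp add: power2_eq_square)
  define c where "c = 1 / (128 * p\<^sup>2 * C)"
  have c0: "c > 0" using C1 p2 by (simp add: c_def)
  have rhs: "(1 / p\<^sup>2) * (1 / C) * \<beta> ^ 4 / 128 - 9 * \<delta> * \<beta>\<^sup>2 / 8 = c * \<beta> ^ 4 - 9 * \<delta> * \<beta>\<^sup>2 / 8"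
    by (simp add: c_def field_simps)
  define \<gamma> where "\<gamma> = 8 / 9 * c * \<beta>\<^sup>2"
  have G0: "G > 0" using b0 bG by simp
  show ?thesis
  proof (cases "\<delta> \<ge> \<gamma>")
    case True
    have "c * \<beta> ^ 4 - 9 * \<delta> * \<beta>\<^sup>2 / 8 \<le> c * \<beta> ^ 4 - 9 * \<gamma> * \<beta>\<^sup>2 / 8"
      using True b0 by (simp add: mult_right_mono)
    also have "\<dots> = 0" by (simp add: \<gamma>_def power2_eq_square power4_eq_xxxx)
    finally show ?thesis using rhs w0 by simp
  next
    case False
    hence dg: "\<delta> < \<gamma>" by simp
    have g0: "\<gamma> > 0" using c0 b0 by (simp add: \<gamma>_def)
    have c512: "c \<le> 1 / 512"
    proof -
      have "128 * 4 * 1 \<le> 128 * p\<^sup>2 * C" using pp C1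
        by (intro mult_mono) auto
      thus ?thesis unfolding c_def by (simp add: field_simps)
    qed
    have b2G: "\<beta>\<^sup>2 \<le> G\<^sup>2" using b0 bG by (simp add: power_mono)
    have gcG: "\<gamma> \<le> c * G\<^sup>2"
    proof -
      have "\<gamma> \<le> c * \<beta>\<^sup>2" unfolding \<gamma>_def using c0 by simp
      also have "\<dots> \<le> c * G\<^sup>2" using b2G c0 by simp
      finally show ?thesis .
    qed
    have g1: "\<gamma> \<le> 1"
    proof -
      have "G\<^sup>2 \<le> 1" using G0 G1 by (simp add: power_le_one)
      hence "c * G\<^sup>2 \<le> 1" using c512 c0 by (intro mult_le_one) auto
      thus ?thesis using gcG by simp
    qed
    have ag: "a \<le> \<gamma>\<^sup>2"
    proof -
      have "\<delta>\<^sup>2 \<le> \<gamma>\<^sup>2" using d0 dg by (simp add: power_mono)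
      thus ?thesis using ad by simp
    qed
    have E1: "((1/\<gamma>) * G * a + G * b / (1/\<gamma>)) / 2 \<le> G * \<gamma>"
    proof -
      have "a / \<gamma> \<le> \<gamma>" using ag g0 by (simp add: divide_le_eq power2_eq_square)
      moreover have "b * \<gamma> \<le> \<gamma>" using b1 g0 by simp
      ultimately have "G * (a / \<gamma>) + G * (b * \<gamma>) \<le> G * \<gamma> + G * \<gamma>" using G0
        by (intro add_mono mult_left_mono) auto
      thus ?thesis by (simp add: field_simps)
    qed
    have E2: "(\<gamma> * G * b + G * a / \<gamma>) / 2 \<le> G * \<gamma>"
    proof -
      have "a / \<gamma> \<le> \<gamma>" using ag g0 by (simp add: divide_le_eq power2_eq_square)
      moreover have "b * \<gamma> \<le> \<gamma>" using b1 g0 by simp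
      ultimately have "G * (a / \<gamma>) + G * (b * \<gamma>) \<le> G * \<gamma> + G * \<gamma>" using G0
        by (intro add_mono mult_left_mono) auto
      thus ?thesis by (simp add: field_simps)
    qed
    have E3: "(1 * G * a + G * a / 1) / 2 \<le> G * \<gamma>"
    proof -
      have "\<gamma> * \<gamma> \<le> 1 * \<gamma>" using g1 g0 by (intro mult_right_mono) auto
      hence "a \<le> \<gamma>" using ag by (simp add: power2_eq_square)
      thus ?thesis using G0 by (simp add: mult_left_mono)
    qed
    have cr: "Dc * w \<ge> X - 2 * Y - a - Dc * (3 * (G * \<gamma>))"
    proof -
      have "Dc * ((1/\<gamma> * G * a + G * b / (1/\<gamma>)) / 2 + (\<gamma> * G * b + G * a / \<gamma>) / 2 + (1 * G * a + G * a / 1) / 2)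
          \<le> Dc * (3 * (G * \<gamma>))"
      proof (rule mult_left_mono)
        show "((1/\<gamma>) * G * a + G * b / (1/\<gamma>)) / 2 + (\<gamma> * G * b + G * a / \<gamma>) / 2 + (1 * G * a + G * a / 1) / 2 \<le> 3 * (G * \<gamma>)"
          using E1 E2 E3 by linarith
      qed (use D1 in simp)
      thus ?thesis using core[of "1/\<gamma>" \<gamma> 1] g0 by simp
    qed
    have aG5: "a \<le> G ^ 5 / 64"
    proof -
      have "c\<^sup>2 \<le> 1 / (8 * p * k)"
      proof -
        have "8 * p * k \<le> 16 * p * C" using kC p2 by simp
        also have "\<dots> \<le> (128 * p\<^sup>2 * C)\<^sup>2" using p2 C1
        proof -
          have pp2: "p \<le> p\<^sup>2" using mult_right_mono[of 1 p p] p2 by (simp add: power2_eq_square)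
          have h1: "16 * p * C \<le> 16 * p\<^sup>2 * C" using mult_right_mono[OF pp2, of "16 * C"] C1 by (simp add: mult_ac)
          have h2: "16 * p\<^sup>2 * C \<le> 128 * p\<^sup>2 * C" using pp C1 by simp
          have s1: "16 * p * C \<le> (128 * p\<^sup>2 * C) * 1" unfolding mult_1_right by (rule order_trans[OF h1 h2])
          have "4 * 1 \<le> p\<^sup>2 * C" using pp C1 by (intro mult_mono) auto
          hence big: "1 \<le> 128 * p\<^sup>2 * C" by simp
          have s2: "(128 * p\<^sup>2 * C) * 1 \<le> (128 * p\<^sup>2 * C) * (128 * p\<^sup>2 * C)" using big C1
            by (intro mult_left_mono) auto
          show ?thesis using order_trans[OF s1 s2] by (simp add: power2_eq_square)
        qed
        finally have "8 * p * k \<le> (128 * p\<^sup>2 * C)\<^sup>2" .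
        moreover have "(128 * p\<^sup>2 * C)\<^sup>2 > 0" using p2 C1 by simp
        ultimately show ?thesis unfolding c_def using p2 k2 by (simp add: power_divide divide_simps)
      qed
      also have "1 / (8 * p * k) \<le> G / 64" using Gk p2 k2 by (simp add: field_simps)
      finally have cG: "c\<^sup>2 \<le> G / 64" .
      have "\<gamma>\<^sup>2 \<le> (c * G\<^sup>2)\<^sup>2" using gcG g0 by (intro power_mono) auto
      hence "a \<le> (c * G\<^sup>2)\<^sup>2" using ag by simp
      also have "\<dots> = c\<^sup>2 * G ^ 4" by (simp add: power_mult_distrib power_mult[symmetric])
      also have "\<dots> \<le> G / 64 * G ^ 4" using cG G0 by (simp add: mult_right_mono)
      also have "\<dots> = G ^ 5 / 64" by (simp add: power_Suc[symmetric] mult.commute)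
      finally show ?thesis .
    qed
    have Ys: "2 * Y \<le> G ^ 3 / 4"
    proof -
      have t0: "G\<^sup>2 / 8 > 0" using G0 by simp
      have y1: "2 * Y \<le> G\<^sup>2 / 8 * G + a / (G\<^sup>2 / 8)" using Yb[OF t0] by simp
      have g5: "G ^ 5 = G\<^sup>2 * G ^ 3" by (simp flip: power_add)
      have e5: "G ^ 3 / 8 * G\<^sup>2 = G ^ 5 / 8" unfolding g5 by (simp add: mult_ac)
      have "8 * a \<le> G ^ 3 / 8 * G\<^sup>2" unfolding e5 using aG5 by simp
      hence h: "8 * a / G\<^sup>2 \<le> G ^ 3 / 8" using G0 by (simp add: pos_divide_le_eq)
      have q1: "a / (G\<^sup>2 / 8) = 8 * a / G\<^sup>2" by simp
      have q2: "G\<^sup>2 / 8 * G = G ^ 3 / 8" by (simp add: power2_eq_square power3_eq_cube)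
      have y2: "2 * Y \<le> G ^ 3 / 8 + 8 * a / G\<^sup>2" using y1 unfolding q1 q2 .
      have "G ^ 3 / 8 + 8 * a / G\<^sup>2 \<le> G ^ 3 / 8 + G ^ 3 / 8" using h by (rule add_left_mono)
      with y2 show ?thesis by simp
    qed
    have as: "a \<le> G ^ 3 / 8"
    proof -
      have "G ^ 5 \<le> G ^ 3" using G0 G1 by (simp add: power_decreasing)
      moreover have "G ^ 3 \<ge> 0" using G0 by simp
      ultimately show ?thesis using aG5 by linarith
    qed
    have "Dc * w \<ge> 5 / 8 * G ^ 3 - Dc * (3 * (G * \<gamma>))" using cr X Ys as by linarith
    hence w1: "w \<ge> 5 / 8 * G ^ 3 / Dc - 3 * (G * \<gamma>)" using D1 by (simp add: field_simps)
    have t1: "5 / 8 * G ^ 3 / Dc \<ge> 5 / 32 * G ^ 3 / C"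
    proof -
      have "Dc \<le> 4 * C" using Dk k4C by simp
      thus ?thesis using D1 C1 G0 by (simp add: field_simps mult_left_mono)
    qed
    have cC: "c \<le> 1 / (512 * C)"
    proof -
      have "512 * C \<le> 128 * p\<^sup>2 * C" using pp C1 mult_right_mono[of 4 "p\<^sup>2" C] by simp
      moreover have "0 < C * (C * p\<^sup>2)" using C1 pp by (intro mult_pos_pos) auto
      ultimately show ?thesis unfolding c_def using C1 pp by (intro divide_left_mono) (auto simp: mult_ac)
    qed
    have t2: "3 * (G * \<gamma>) \<le> 3 * G ^ 3 / (512 * C)"
    proof -
      have "3 * (G * \<gamma>) \<le> 3 * (G * (c * G\<^sup>2))" using gcG G0 by simp
      also have "3 * (G * (c * G\<^sup>2)) \<le> 3 * (G * (1 / (512 * C) * G\<^sup>2))"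
      proof -
        have "c * (3 * G * G\<^sup>2) \<le> 1 / (512 * C) * (3 * G * G\<^sup>2)" by (rule mult_right_mono[OF cC]) (use G0 in simp)
        thus ?thesis by (simp only: mult_ac)
      qed
      also have "\<dots> \<le> 3 * G ^ 3 / (512 * C)" using C1 G0 by (simp add: field_simps power2_eq_square power3_eq_cube)
      finally show ?thesis .
    qed
    have t3: "c * \<beta> ^ 4 \<le> G ^ 3 / (512 * C)"
    proof -
      have "\<beta> ^ 4 \<le> G ^ 4" using b0 bG by (simp add: power_mono)
      also have "\<dots> \<le> G ^ 3" using G0 G1 by (simp add: power_decreasing)
      finally have "c * \<beta> ^ 4 \<le> c * G ^ 3" using c0 by simp
      also have "c * G ^ 3 \<le> G ^ 3 / (512 * C)" using G0 cC mult_right_mono[OF cC, of "G ^ 3"] by simp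
      finally show ?thesis .
    qed
    have "G ^ 3 / (512 * C) \<le> 5 / 32 * G ^ 3 / C - 3 * G ^ 3 / (512 * C)"
      using C1 G0 by (simp add: field_simps)
    hence "w \<ge> c * \<beta> ^ 4" using w1 t1 t2 t3 by linarith
    moreover have "9 * \<delta> * \<beta>\<^sup>2 / 8 \<ge> 0" using d0 by simp
    ultimately show ?thesis using rhs by linarith
  qed
qed


lemma cube_tangent: fixes x G :: real assumes "0 \<le> x" "0 \<le> G" shows "x ^ 3 \<ge> 3 * G\<^sup>2 * x - 2 * G ^ 3"
proof -
  have "0 \<le> (x - G)\<^sup>2 * (x + 2 * G)" using assms by simp
  also have "(x - G)\<^sup>2 * (x + 2 * G) = x ^ 3 - (3 * G\<^sup>2 * x - 2 * G ^ 3)"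
    by (simp add: power2_eq_square power3_eq_cube algebra_simps)
  finally show ?thesis by simp
qed

lemma main_bound:
  fixes f g :: "(nat \<Rightarrow> nat) \<Rightarrow> real" and k :: nat and C \<beta> \<delta> :: real
  assumes p1: "1 < p" and k2: "2 \<le> k"
    and f01: "\<forall>m\<in>Fv p n. 0 \<le> f m \<and> f m \<le> 1" and g01: "\<forall>m\<in>Fv p n. 0 \<le> g m \<and> g m \<le> 1"
    and gf: "\<forall>m\<in>Fv p n. g m \<le> f m"
    and ST: "S \<union> T = Fv p n" "S \<inter> T = {}" and Sk: "card S \<le> k" and Sne: "S \<noteq> {}"
    and sig: "(\<Sum>a\<in>T. (cmod (fhat p n (\<lambda>x. complex_of_real (f x)) a))\<^sup>2) \<le> \<delta>\<^sup>2 * (real (card (Fv p n)))\<^sup>2"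
    and d0: "0 \<le> \<delta>" and b0: "0 < \<beta>"
    and bG: "\<beta> \<le> (\<Sum>m\<in>Fv p n. g m) / real (card (Fv p n))"
    and Gk: "8 / (real p * real k) \<le> (\<Sum>m\<in>Fv p n. g m) / real (card (Fv p n))"
    and ss: "(s' * s) mod p = 1" and tt: "(t' * t) mod p = 1"
    and C: "2 * C = real k * (real k - 1)"
  shows "(\<Sum>m\<in>Fv p n. \<Sum>d\<in>Fv p n. g m * f (vadd p m (smul p s d)) * f (vadd p m (smul p t d))) / (real (card (Fv p n)))\<^sup>2
     \<ge> (1 / (real p)\<^sup>2) * (1 / C) * \<beta> ^ 4 / 128 - 9 * \<delta> * \<beta>\<^sup>2 / 8"
proof -
  have p0: "0 < p" using p1 by simp
  have fin: "finite (Fv p n)" using Fv_card[OF p0] by simp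
  define N where "N = real (card (Fv p n))"
  have N0: "N > 0" using Fv_card[OF p0] p0 by (simp add: N_def)
  have SF: "S \<subseteq> Fv p n" and TF: "T \<subseteq> Fv p n" using ST by auto
  have finS: "finite S" using SF fin finite_subset by auto
  define D where "D = (\<lambda>(a, b). vadd p (smul p s a) (smul p t b)) ` (S \<times> S)"
  define fT where "fT = proj p n T (\<lambda>x. complex_of_real (f x))"
  define A where "A = (\<Sum>m\<in>Fv p n. (cmod (fT m))\<^sup>2)"
  define B where "B = (\<Sum>m\<in>Fv p n. (f m)\<^sup>2)"
  define Sg where "Sg = (\<Sum>m\<in>Fv p n. g m)"
  define W where "W = (\<Sum>m\<in>Fv p n. \<Sum>d\<in>Fv p n. g m * f (vadd p m (smul p s d)) * f (vadd p m (smul p t d)))"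
  define SgF2 where "SgF2 = (\<Sum>m\<in>Fv p n. g m * (f m)\<^sup>2)"
  define SgfT where "SgfT = (\<Sum>m\<in>Fv p n. g m * cmod (fT m))"
  define G where "G = Sg / N"
  have core': "real (card D) * W \<ge> N * (SgF2 - 2 * SgfT - A)
       - real (card D) * ((e1 * Sg * A + Sg * B / e1) / 2 + (e2 * Sg * B + Sg * A / e2) / 2 + (e3 * Sg * A + Sg * A / e3) / 2)"
    if "e1 > 0" "e2 > 0" "e3 > 0" for e1 e2 e3
    using core[OF p1 f01 g01 ST ss tt that D_def fT_def A_def B_def Sg_def]
    unfolding W_def N_def SgF2_def SgfT_def by simp
  have finD: "finite D" unfolding D_def using finS by simp
  have D1: "1 \<le> real (card D)"
  proof -
    have "D \<noteq> {}" unfolding D_def using Sne by auto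
    hence "card D \<ge> 1" using finD by (simp add: Suc_le_eq card_gt_0_iff)
    thus ?thesis by simp
  qed
  have Dk: "real (card D) \<le> (real k)\<^sup>2"
  proof -
    have "card D \<le> card (S \<times> S)" unfolding D_def using finS by (intro card_image_le) simp
    also have "\<dots> = card S * card S" by (simp add: card_cartesian_product)
    also have "\<dots> \<le> k * k" using Sk by (intro mult_mono) auto
    finally show ?thesis by (simp add: power2_eq_square flip: of_nat_mult)
  qed
  have Apars: "A = (\<Sum>a\<in>T. (cmod (fhat p n (\<lambda>x. complex_of_real (f x)) a))\<^sup>2) / N"
    unfolding A_def fT_def N_def using parseval_proj[OF p1 TF] by simp
  have aN: "A / N \<le> \<delta>\<^sup>2"
  proof -
    have "A \<le> \<delta>\<^sup>2 * N\<^sup>2 / N" unfolding Apars using sig N0 by (simp add: N_def divide_right_mono)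
    also have "\<dots> = \<delta>\<^sup>2 * N" using N0 by (simp add: power2_eq_square)
    finally show ?thesis using N0 by (simp add: pos_divide_le_eq)
  qed
  have A0: "0 \<le> A" unfolding A_def by (simp add: sum_nonneg)
  have B0: "0 \<le> B" unfolding B_def by (simp add: sum_nonneg)
  have BN: "B / N \<le> 1"
  proof -
    have "B \<le> (\<Sum>m\<in>Fv p n. 1)" unfolding B_def using f01 by (intro sum_mono) (simp add: power_le_one)
    thus ?thesis using N0 by (simp add: N_def)
  qed
  have G0: "0 < G" using b0 bG unfolding G_def Sg_def N_def by simp
  have G1: "G \<le> 1"
  proof -
    have "Sg \<le> (\<Sum>m\<in>Fv p n. 1)" unfolding Sg_def using g01 by (intro sum_mono) simp
    thus ?thesis using N0 by (simp add: G_def N_def)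
  qed
  have SgG: "Sg = N * G" using N0 by (simp add: G_def)
  have X: "G ^ 3 \<le> SgF2 / N"
  proof -
    have "(\<Sum>m\<in>Fv p n. 3 * G\<^sup>2 * g m - 2 * G ^ 3) \<le> SgF2"
      unfolding SgF2_def
    proof (intro sum_mono)
      fix m assume m: "m \<in> Fv p n"
      have "3 * G\<^sup>2 * g m - 2 * G ^ 3 \<le> g m ^ 3" using cube_tangent[of "g m" G] g01 m G0 by simp
      also have "g m ^ 3 = g m * (g m)\<^sup>2" by (simp add: power2_eq_square power3_eq_cube)
      also have "\<dots> \<le> g m * (f m)\<^sup>2" using g01 gf m by (intro mult_left_mono power_mono) auto
      finally show "3 * G\<^sup>2 * g m - 2 * G ^ 3 \<le> g m * (f m)\<^sup>2" .
    qed
    moreover have "(\<Sum>m\<in>Fv p n. 3 * G\<^sup>2 * g m - 2 * G ^ 3) = 3 * G\<^sup>2 * Sg - 2 * G ^ 3 * N"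
    proof -
      have "(\<Sum>m\<in>Fv p n. 3 * G\<^sup>2 * g m) = 3 * G\<^sup>2 * Sg" unfolding Sg_def by (rule sum_distrib_left[symmetric])
      thus ?thesis by (simp add: sum_subtractf N_def)
    qed
    moreover have "3 * G\<^sup>2 * Sg - 2 * G ^ 3 * N = N * G ^ 3"
      by (simp add: SgG power2_eq_square power3_eq_cube algebra_simps)
    ultimately have "N * G ^ 3 \<le> SgF2" by simp
    thus ?thesis using N0 by (simp add: pos_le_divide_eq mult.commute)
  qed
  have Yb: "SgfT / N \<le> (t * G + (A / N) / t) / 2" if t0: "t > 0" for t
  proof -
    have "SgfT \<le> (\<Sum>m\<in>Fv p n. (t * g m + (cmod (fT m))\<^sup>2 / t) / 2)"
      unfolding SgfT_def
    proof (intro sum_mono)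
      fix m assume m: "m \<in> Fv p n"
      have "g m * cmod (fT m) \<le> (t * (g m)\<^sup>2 + (cmod (fT m))\<^sup>2 / t) / 2" by (rule amgm[OF t0])
      also have "(g m)\<^sup>2 \<le> g m" using g01 m by (simp add: power2_eq_square mult_left_le_one_le)
      hence "(t * (g m)\<^sup>2 + (cmod (fT m))\<^sup>2 / t) / 2 \<le> (t * g m + (cmod (fT m))\<^sup>2 / t) / 2"
        using t0 by simp
      finally show "g m * cmod (fT m) \<le> (t * g m + (cmod (fT m))\<^sup>2 / t) / 2" .
    qed
    also have "\<dots> = (t * Sg + A / t) / 2"
      by (simp add: Sg_def A_def sum_distrib_left sum_divide_distrib[symmetric] sum.distrib)
    finally have "SgfT \<le> (t * Sg + A / t) / 2" .
    hence "SgfT / N \<le> (t * Sg + A / t) / 2 / N" using N0 by (intro divide_right_mono) auto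
    also have "\<dots> = (t * G + (A / N) / t) / 2" using N0 by (simp add: G_def field_simps)
    finally show ?thesis .
  qed
  have w0: "0 \<le> W / N\<^sup>2"
  proof -
    have "0 \<le> W" unfolding W_def using f01 g01 p0
      by (intro sum_nonneg) (auto intro!: mult_nonneg_nonneg vadd_Fv smul_Fv)
    thus ?thesis by simp
  qed
  have coreN: "real (card D) * (W / N\<^sup>2) \<ge> SgF2 / N - 2 * (SgfT / N) - A / N
     - real (card D) * ((e1 * G * (A / N) + G * (B / N) / e1) / 2 + (e2 * G * (B / N) + G * (A / N) / e2) / 2 + (e3 * G * (A / N) + G * (A / N) / e3) / 2)"
    if e: "e1 > 0" "e2 > 0" "e3 > 0" for e1 e2 e3
  proof -
    have h: "N\<^sup>2 * (SgF2 / N - 2 * (SgfT / N) - A / N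
     - real (card D) * ((e1 * G * (A / N) + G * (B / N) / e1) / 2 + (e2 * G * (B / N) + G * (A / N) / e2) / 2 + (e3 * G * (A / N) + G * (A / N) / e3) / 2))
     = N * (SgF2 - 2 * SgfT - A)
       - real (card D) * ((e1 * Sg * A + Sg * B / e1) / 2 + (e2 * Sg * B + Sg * A / e2) / 2 + (e3 * Sg * A + Sg * A / e3) / 2)"
      using N0 e by (simp add: SgG field_simps power2_eq_square)
    have "N\<^sup>2 * (real (card D) * (W / N\<^sup>2)) = real (card D) * W" using N0 by simp
    hence "N\<^sup>2 * (SgF2 / N - 2 * (SgfT / N) - A / N
     - real (card D) * ((e1 * G * (A / N) + G * (B / N) / e1) / 2 + (e2 * G * (B / N) + G * (A / N) / e2) / 2 + (e3 * G * (A / N) + G * (A / N) / e3) / 2))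
      \<le> N\<^sup>2 * (real (card D) * (W / N\<^sup>2))" using core'[OF e] h by simp
    thus ?thesis by (rule mult_left_le_imp_le) (use N0 in simp)
  qed
  have pk: "8 / (real p * real k) \<le> G" using Gk by (simp add: G_def Sg_def N_def)
  have "W / N\<^sup>2 \<ge> (1 / (real p)\<^sup>2) * (1 / C) * \<beta> ^ 4 / 128 - 9 * \<delta> * \<beta>\<^sup>2 / 8"
  proof (rule numeric[where X = "SgF2 / N" and Y = "SgfT / N" and a = "A / N" and b = "B / N" and G = G and Dc = "real (card D)"])
    show "2 \<le> real k" using k2 by simp
    show "2 \<le> real p" using p1 by simp
  qed (use C D1 Dk b0 bG pk d0 A0 N0 aN B0 BN G1 X w0 Yb coreN in \<open>auto simp: G_def Sg_def N_def\<close>)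
  thus ?thesis unfolding W_def N_def .
qed


lemma sorted_enum_ex: assumes "1 < p" shows "\<exists>e. sorted_enum p n h e"
proof -
  have p0: "0 < p" using assms by simp
  have fin: "finite (Fv p n)" using Fv_card[OF p0] by simp
  obtain xs where xs: "set xs = Fv p n" "distinct xs" using finite_distinct_list[OF fin] by blast
  define key where "key = (\<lambda>a. - cmod (fhat p n h a))"
  define ys where "ys = sort_key key xs"
  have ys: "set ys = Fv p n" "distinct ys" "sorted (map key ys)" using xs by (auto simp: ys_def)
  have len: "length ys = card (Fv p n)" using ys distinct_card by fastforce
  define e where "e = (\<lambda>j. ys ! (j - 1))"
  have bij: "bij_betw e {1..card (Fv p n)} (Fv p n)"
  proof (rule bij_betw_imageI)
    show "inj_on e {1..card (Fv p n)}"
    proof (rule inj_onI)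
      fix i j assume i: "i \<in> {1..card (Fv p n)}" and j: "j \<in> {1..card (Fv p n)}" and eq: "e i = e j"
      have b: "i - 1 < length ys" "j - 1 < length ys" using i j len by auto
      have "i - 1 = j - 1" using eq nth_eq_iff_index_eq[OF ys(2) b] by (simp add: e_def)
      thus "i = j" using i j by auto
    qed
    show "e ` {1..card (Fv p n)} = Fv p n"
    proof
      show "e ` {1..card (Fv p n)} \<subseteq> Fv p n"
      proof
        fix y assume "y \<in> e ` {1..card (Fv p n)}"
        then obtain j where j: "j \<in> {1..card (Fv p n)}" "y = e j" by blast
        hence "j - 1 < length ys" using len by auto
        hence "ys ! (j - 1) \<in> set ys" by (rule nth_mem)
        thus "y \<in> Fv p n" using j ys(1) by (simp add: e_def)
      qed
      show "Fv p n \<subseteq> e ` {1..card (Fv p n)}"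
      proof
        fix x assume "x \<in> Fv p n"
        then obtain i where i: "i < length ys" "ys ! i = x" using ys(1) by (metis in_set_conv_nth)
        hence "Suc i \<in> {1..card (Fv p n)}" "e (Suc i) = x" using len by (auto simp: e_def)
        thus "x \<in> e ` {1..card (Fv p n)}" by force
      qed
    qed
  qed
  have mono: "norm (fhat p n h (e j)) \<le> norm (fhat p n h (e i))"
    if "1 \<le> i" "i \<le> j" "j \<le> card (Fv p n)" for i j
  proof -
    have "(map key ys) ! (i - 1) \<le> (map key ys) ! (j - 1)"
      using that len by (intro sorted_nth_mono[OF ys(3)]) auto
    thus ?thesis using that len by (simp add: key_def e_def)
  qed
  show ?thesis using bij mono unfolding sorted_enum_def by blast
qed

lemma enum_partition:
  assumes p1: "1 < p" and se: "sorted_enum p n h e" and k1: "1 \<le> k"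
  defines "T \<equiv> e ` {k<..card (Fv p n)}"
  shows "(Fv p n - T) \<union> T = Fv p n" "(Fv p n - T) \<inter> T = {}" "card (Fv p n - T) \<le> k" "Fv p n - T \<noteq> {}"
    "(\<Sum>j\<in>{k<..card (Fv p n)}. (norm (fhat p n h (e j)))\<^sup>2) = (\<Sum>a\<in>T. (norm (fhat p n h a))\<^sup>2)"
proof -
  have p0: "0 < p" using p1 by simp
  let ?N = "card (Fv p n)"
  have bij: "bij_betw e {1..?N} (Fv p n)" using se unfolding sorted_enum_def by blast
  have inj: "inj_on e {1..?N}" using bij bij_betw_imp_inj_on by blast
  have sub: "{k<..?N} \<subseteq> {1..?N}" using k1 by auto
  have TF: "T \<subseteq> Fv p n" unfolding T_def using bij sub bij_betw_imp_surj_on by blast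
  show "(Fv p n - T) \<union> T = Fv p n" using TF by blast
  show "(Fv p n - T) \<inter> T = {}" by blast
  have "Fv p n - T = e ` ({1..?N} - {k<..?N})"
    unfolding T_def using inj sub bij_betw_imp_surj_on[OF bij] by (simp add: inj_on_image_set_diff)
  also have "card \<dots> \<le> card ({1..?N} - {k<..?N})" by (rule card_image_le) simp
  also have "\<dots> \<le> card {1..k}" by (intro card_mono) auto
  finally show "card (Fv p n - T) \<le> k" by simp
  have N1: "1 \<le> ?N" using Fv_card[OF p0, of n] p0 by simp
  have e1: "e 1 \<in> Fv p n" using bij N1 bij_betw_apply by fastforce
  have "e 1 \<notin> T"
  proof
    assume "e 1 \<in> T"
    then obtain j where j: "j \<in> {k<..?N}" "e 1 = e j" unfolding T_def by blast
    have "1 \<in> {1..?N}" "j \<in> {1..?N}" using N1 j(1) sub by auto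
    hence "1 = j" using inj_onD[OF inj j(2)] by blast
    thus False using j k1 by simp
  qed
  thus "Fv p n - T \<noteq> {}" using e1 by blast
  show "(\<Sum>j\<in>{k<..?N}. (norm (fhat p n h (e j)))\<^sup>2) = (\<Sum>a\<in>T. (norm (fhat p n h a))\<^sup>2)"
    unfolding T_def using inj_on_subset[OF inj sub] by (simp add: sum.reindex)
qed

lemma lambda_reindex1:
  fixes f g :: "(nat \<Rightarrow> nat) \<Rightarrow> real"
  assumes p1: "1 < p"
  shows "(\<Sum>m\<in>Fv p n. \<Sum>d\<in>Fv p n. f m * g (vadd p m d) * f (vadd p m (vadd p d d)))
       = (\<Sum>m\<in>Fv p n. \<Sum>d\<in>Fv p n. g m * f (vadd p m (smul p (p - 1) d)) * f (vadd p m (smul p 1 d)))"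
proof -
  have p0: "0 < p" using p1 by simp
  have "(\<Sum>m\<in>Fv p n. \<Sum>d\<in>Fv p n. f m * g (vadd p m d) * f (vadd p m (vadd p d d)))
      = (\<Sum>d\<in>Fv p n. \<Sum>m\<in>Fv p n. f m * g (vadd p m d) * f (vadd p m (vadd p d d)))" by (rule sum.swap)
  also have "\<dots> = (\<Sum>d\<in>Fv p n. \<Sum>y\<in>Fv p n. g y * f (vadd p y (smul p (p - 1) d)) * f (vadd p y (smul p 1 d)))"
  proof (rule sum.cong[OF refl])
    fix d assume d: "d \<in> Fv p n"
    define x where "x = smul p (p - 1) d"
    have xF: "x \<in> Fv p n" unfolding x_def using smul_Fv[OF p0 d] .
    have xd: "vadd p x d = zv" unfolding x_def using vadd_neg[OF p0 d] vadd_comm by metis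
    have zd: "vadd p zv d = d" using vadd_zv[OF p0 d] vadd_comm by metis
    have s1: "smul p 1 d = d" using smul_one[OF p0 d] p1 by simp
    have "(\<Sum>m\<in>Fv p n. f m * g (vadd p m d) * f (vadd p m (vadd p d d)))
        = (\<Sum>y\<in>Fv p n. f (vadd p y x) * g (vadd p (vadd p y x) d) * f (vadd p (vadd p y x) (vadd p d d)))"
      using sum_transl[OF p0 xF, of "\<lambda>m. f m * g (vadd p m d) * f (vadd p m (vadd p d d))"] by simp
    also have "\<dots> = (\<Sum>y\<in>Fv p n. g y * f (vadd p y (smul p (p - 1) d)) * f (vadd p y (smul p 1 d)))"
    proof (rule sum.cong[OF refl])
      fix y assume y: "y \<in> Fv p n"
      have a1: "vadd p (vadd p y x) d = y" using xd vadd_zv[OF p0 y] by (simp add: vadd_assoc)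
      have a2: "vadd p (vadd p y x) (vadd p d d) = vadd p y d"
      proof -
        have "vadd p (vadd p y x) (vadd p d d) = vadd p y (vadd p (vadd p x d) d)" by (simp add: vadd_assoc)
        also have "\<dots> = vadd p y d" using xd zd by simp
        finally show ?thesis .
      qed
      show "f (vadd p y x) * g (vadd p (vadd p y x) d) * f (vadd p (vadd p y x) (vadd p d d))
          = g y * f (vadd p y (smul p (p - 1) d)) * f (vadd p y (smul p 1 d))"
        unfolding a1 a2 s1 x_def[symmetric] by (subst mult.commute[of "f (vadd p y x)" "g y"]) (rule refl)
    qed
    finally show "(\<Sum>m\<in>Fv p n. f m * g (vadd p m d) * f (vadd p m (vadd p d d)))
        = (\<Sum>y\<in>Fv p n. g y * f (vadd p y (smul p (p - 1) d)) * f (vadd p y (smul p 1 d)))" .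
  qed
  also have "\<dots> = (\<Sum>m\<in>Fv p n. \<Sum>d\<in>Fv p n. g m * f (vadd p m (smul p (p - 1) d)) * f (vadd p m (smul p 1 d)))"
    by (rule sum.swap)
  finally show ?thesis .
qed

lemma lambda_reindex2:
  assumes p1: "1 < p"
  shows "(\<Sum>m\<in>Fv p n. \<Sum>d\<in>Fv p n. g m * f (vadd p m d) * f (vadd p m (vadd p d d)))
       = (\<Sum>m\<in>Fv p n. \<Sum>d\<in>Fv p n. g m * f (vadd p m (smul p 1 d)) * f (vadd p m (smul p 2 d)))"
proof (intro sum.cong refl)
  fix m d assume d: "d \<in> Fv p n"
  have s1: "smul p 1 d = d" using smul_one[of p d n 1] p1 d by simp
  show "g m * f (vadd p m d) * f (vadd p m (vadd p d d)) = g m * f (vadd p m (smul p 1 d)) * f (vadd p m (smul p 2 d))"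
    unfolding s1 smul_two by simp
qed

lemma p2_case:
  fixes f g :: "(nat \<Rightarrow> nat) \<Rightarrow> real"
  assumes p2: "p = 2"
    and f01: "\<forall>m\<in>Fv p n. 0 \<le> f m \<and> f m \<le> 1" and g01: "\<forall>m\<in>Fv p n. 0 \<le> g m \<and> g m \<le> 1"
    and gf: "\<forall>m\<in>Fv p n. g m \<le> f m"
  shows "Lambda3 p n g f f \<ge> (Ex p n g) ^ 3"
proof -
  have p0: "0 < p" using p2 by simp
  have fin: "finite (Fv p n)" using Fv_card[OF p0] by simp
  define N where "N = real (card (Fv p n))"
  have N0: "N > 0" using Fv_card[OF p0] p0 by (simp add: N_def)
  define G where "G = (\<Sum>m\<in>Fv p n. g m) / N"
  have dd: "vadd p d d = zv" for d unfolding vadd_def zv_def p2 by auto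
  have "(\<Sum>m\<in>Fv p n. \<Sum>d\<in>Fv p n. g m * f (vadd p m d) * f (vadd p m (vadd p d d)))
      = (\<Sum>m\<in>Fv p n. g m * f m * (\<Sum>d\<in>Fv p n. f (vadd p d m)))"
  proof (intro sum.cong refl)
    fix m assume m: "m \<in> Fv p n"
    show "(\<Sum>d\<in>Fv p n. g m * f (vadd p m d) * f (vadd p m (vadd p d d))) = g m * f m * (\<Sum>d\<in>Fv p n. f (vadd p d m))"
      using vadd_zv[OF p0 m] by (simp add: dd sum_distrib_left vadd_comm mult_ac)
  qed
  also have "\<dots> = (\<Sum>m\<in>Fv p n. g m * f m) * (\<Sum>d\<in>Fv p n. f d)"
  proof -
    have "(\<Sum>m\<in>Fv p n. g m * f m * (\<Sum>d\<in>Fv p n. f (vadd p d m))) = (\<Sum>m\<in>Fv p n. g m * f m * (\<Sum>d\<in>Fv p n. f d))"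
      by (intro sum.cong refl) (simp add: sum_transl[OF p0])
    thus ?thesis by (simp add: sum_distrib_right)
  qed
  finally have L: "(\<Sum>m\<in>Fv p n. \<Sum>d\<in>Fv p n. g m * f (vadd p m d) * f (vadd p m (vadd p d d)))
      = (\<Sum>m\<in>Fv p n. g m * f m) * (\<Sum>d\<in>Fv p n. f d)" .
  have G0: "0 \<le> G" unfolding G_def using g01 N0 by (simp add: sum_nonneg)
  have a1: "N * G\<^sup>2 \<le> (\<Sum>m\<in>Fv p n. g m * f m)"
  proof -
    have "(\<Sum>m\<in>Fv p n. 2 * G * g m - G\<^sup>2) \<le> (\<Sum>m\<in>Fv p n. g m * f m)"
    proof (intro sum_mono)
      fix m assume m: "m \<in> Fv p n"
      have "2 * G * g m - G\<^sup>2 \<le> g m * g m" using sum_squares_ge_zero[of "g m - G" 0]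
        by (simp add: power2_eq_square algebra_simps)
      also have "\<dots> \<le> g m * f m" using g01 gf m by (intro mult_left_mono) auto
      finally show "2 * G * g m - G\<^sup>2 \<le> g m * f m" .
    qed
    moreover have "(\<Sum>m\<in>Fv p n. 2 * G * g m - G\<^sup>2) = N * G\<^sup>2"
    proof -
      have SG: "(\<Sum>m\<in>Fv p n. g m) = G * N" using N0 by (simp add: G_def)
      have "(\<Sum>m\<in>Fv p n. 2 * G * g m) = 2 * G * (\<Sum>m\<in>Fv p n. g m)" by (rule sum_distrib_left[symmetric])
      hence "(\<Sum>m\<in>Fv p n. 2 * G * g m) = 2 * G * (G * N)" by (simp only: SG)
      thus ?thesis by (simp add: sum_subtractf N_def power2_eq_square algebra_simps)
    qed
    ultimately show ?thesis by simp
  qed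
  have a2: "N * G \<le> (\<Sum>d\<in>Fv p n. f d)"
  proof -
    have "(\<Sum>m\<in>Fv p n. g m) \<le> (\<Sum>d\<in>Fv p n. f d)" using gf by (intro sum_mono) auto
    thus ?thesis using N0 by (simp add: G_def)
  qed
  have "(N * G\<^sup>2) * (N * G) \<le> (\<Sum>m\<in>Fv p n. g m * f m) * (\<Sum>d\<in>Fv p n. f d)"
  proof -
    have "0 \<le> (\<Sum>m\<in>Fv p n. g m * f m)" using g01 f01 by (intro sum_nonneg) auto
    thus ?thesis using a1 a2 N0 G0 by (intro mult_mono) auto
  qed
  hence "N\<^sup>2 * G ^ 3 \<le> (\<Sum>m\<in>Fv p n. \<Sum>d\<in>Fv p n. g m * f (vadd p m d) * f (vadd p m (vadd p d d)))"
    unfolding L by (simp add: power2_eq_square power3_eq_cube mult_ac)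
  hence "G ^ 3 \<le> (\<Sum>m\<in>Fv p n. \<Sum>d\<in>Fv p n. g m * f (vadd p m d) * f (vadd p m (vadd p d d))) / N\<^sup>2"
    using N0 by (simp add: pos_le_divide_eq mult.commute)
  thus ?thesis unfolding Lambda3_def Ex_def G_def N_def by simp
qed


theorem theorem1:
  fixes p n k :: nat and \<theta> \<delta> :: real and f g :: "(nat \<Rightarrow> nat) \<Rightarrow> real"
  assumes "prime p" and "n \<ge> 1"
    and "2 \<le> k" and "k \<le> p ^ n"
    and "\<delta> \<ge> 0"
    and "\<forall>m\<in>Fv p n. 0 \<le> f m \<and> f m \<le> 1"
    and "\<forall>m\<in>Fv p n. 0 \<le> g m \<and> g m \<le> 1"
    and "\<forall>m\<in>Fv p n. f m \<ge> g m \<and> g m \<ge> 0"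
    and "Ex p n f \<ge> Ex p n g"
    and "Ex p n g \<ge> max (real (p ^ n) powr (- \<theta>)) (8 / (sqrt (real p) * real k))"
    and "sigma p n (\<lambda>m. complex_of_real (f m)) k \<le> \<delta>\<^sup>2 * (real (p ^ n))\<^sup>2"
  shows "Lambda3 p n f g f \<ge>
           (1 / (real p)\<^sup>2) * (1 / real (k choose 2)) * real (p ^ n) powr (-4 * \<theta>) / 128
           - 9 * \<delta> * real (p ^ n) powr (-2 * \<theta>) / 8
       \<and> Lambda3 p n g f f \<ge>
           (1 / (real p)\<^sup>2) * (1 / real (k choose 2)) * real (p ^ n) powr (-4 * \<theta>) / 128
           - 9 * \<delta> * real (p ^ n) powr (-2 * \<theta>) / 8"
proof -
  have p1: "1 < p" using assms(1) prime_gt_1_nat by blast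
  have p0: "0 < p" using p1 by simp
  have k1: "1 \<le> k" using assms(3) by simp
  have cardF: "card (Fv p n) = p ^ n" using Fv_card[OF p0] by simp
  have f01: "\<forall>m\<in>Fv p n. 0 \<le> f m \<and> f m \<le> 1" using assms(6) .
  have g01: "\<forall>m\<in>Fv p n. 0 \<le> g m \<and> g m \<le> 1" using assms(7) .
  have gf: "\<forall>m\<in>Fv p n. g m \<le> f m" using assms(8) by auto
  define fc where "fc = (\<lambda>m. complex_of_real (f m))"
  define e0 where "e0 = (SOME e. sorted_enum p n fc e)"
  have se: "sorted_enum p n fc e0" unfolding e0_def using someI_ex[OF sorted_enum_ex[OF p1]] .
  define T where "T = e0 ` {k<..card (Fv p n)}"
  define S where "S = Fv p n - T"
  note EP = enum_partition[OF p1 se k1, folded T_def S_def]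
  have sig: "(\<Sum>a\<in>T. (cmod (fhat p n (\<lambda>x. complex_of_real (f x)) a))\<^sup>2) \<le> \<delta>\<^sup>2 * (real (card (Fv p n)))\<^sup>2"
  proof -
    have "sigma p n fc k = (\<Sum>j\<in>{k<..card (Fv p n)}. (norm (fhat p n fc (e0 j)))\<^sup>2)"
      unfolding sigma_def e0_def by (simp add: Let_def)
    also have "\<dots> = (\<Sum>a\<in>T. (norm (fhat p n fc a))\<^sup>2)" using EP(5) .
    finally show ?thesis using assms(11) cardF unfolding fc_def by simp
  qed
  define N where "N = real (card (Fv p n))"
  define G where "G = (\<Sum>m\<in>Fv p n. g m) / N"
  have N0: "N > 0" using cardF p0 by (simp add: N_def)
  have ExG: "Ex p n g = G" unfolding Ex_def G_def N_def by simp
  define \<beta> where "\<beta> = real (p ^ n) powr (- \<theta>)"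
  have b0: "0 < \<beta>" unfolding \<beta>_def using p0 by simp
  have bG: "\<beta> \<le> G" using assms(10) ExG unfolding \<beta>_def by simp
  have sq: "sqrt (real p) \<le> real p"
  proof -
    have s1: "1 \<le> sqrt (real p)" using p1 by simp
    have "sqrt (real p) = 1 * sqrt (real p)" by simp
    also have "\<dots> \<le> sqrt (real p) * sqrt (real p)" using s1 by (intro mult_right_mono) auto
    also have "\<dots> = real p" by simp
    finally show ?thesis .
  qed
  have Gk: "8 / (real p * real k) \<le> G"
  proof -
    have "8 / (real p * real k) \<le> 8 / (sqrt (real p) * real k)"
      using sq p1 k1 by (intro divide_left_mono mult_right_mono mult_pos_pos) auto
    also have "\<dots> \<le> G" using assms(10) ExG by simp
    finally show ?thesis .
  qed
  have G1: "G \<le> 1"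
  proof -
    have "(\<Sum>m\<in>Fv p n. g m) \<le> (\<Sum>m\<in>Fv p n. 1)" using g01 by (intro sum_mono) simp
    thus ?thesis using N0 by (simp add: G_def N_def)
  qed
  define C where "C = real (k choose 2)"
  have C: "2 * C = real k * (real k - 1)"
  proof -
    have ev: "even (k * (k - 1))" by auto
    have "k choose 2 = k * (k - 1) div 2" by (rule choose_two)
    hence "2 * (k choose 2) = k * (k - 1)" using ev by simp
    hence "2 * C = real (k * (k - 1))" unfolding C_def by (metis of_nat_mult of_nat_numeral)
    thus ?thesis using k1 by (simp add: of_nat_diff)
  qed
  have pw4: "real (p ^ n) powr (-4 * \<theta>) = \<beta> ^ 4"
    unfolding \<beta>_def using p0 by (simp add: powr_power)
  have pw2: "real (p ^ n) powr (-2 * \<theta>) = \<beta>\<^sup>2"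
    unfolding \<beta>_def using p0 by (simp add: powr_power)
  have RHS: "(1 / (real p)\<^sup>2) * (1 / real (k choose 2)) * real (p ^ n) powr (-4 * \<theta>) / 128
           - 9 * \<delta> * real (p ^ n) powr (-2 * \<theta>) / 8 = (1 / (real p)\<^sup>2) * (1 / C) * \<beta> ^ 4 / 128 - 9 * \<delta> * \<beta>\<^sup>2 / 8"
    unfolding pw4 pw2 C_def ..
  have bG': "\<beta> \<le> (\<Sum>m\<in>Fv p n. g m) / real (card (Fv p n))" using bG by (simp add: G_def N_def)
  have Gk': "8 / (real p * real k) \<le> (\<Sum>m\<in>Fv p n. g m) / real (card (Fv p n))" using Gk by (simp add: G_def N_def)
  have c1: "Lambda3 p n f g f \<ge> (1 / (real p)\<^sup>2) * (1 / C) * \<beta> ^ 4 / 128 - 9 * \<delta> * \<beta>\<^sup>2 / 8"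
  proof -
    have ss: "((p - 1) * (p - 1)) mod p = 1"
    proof -
      have "(p - 1) * (p - 1) = 1 + p * (p - 2)" using p1
        by (cases p; cases "p - 1") (auto simp: algebra_simps)
      hence "((p - 1) * (p - 1)) mod p = 1 mod p" by (simp only: mod_mult_self2)
      thus ?thesis using p1 by simp
    qed
    have tt: "(1 * 1) mod p = 1" using p1 by simp
    have "Lambda3 p n f g f = (\<Sum>m\<in>Fv p n. \<Sum>d\<in>Fv p n. g m * f (vadd p m (smul p (p - 1) d)) * f (vadd p m (smul p 1 d))) / (real (card (Fv p n)))\<^sup>2"
      unfolding Lambda3_def using lambda_reindex1[OF p1, of f g n] by simp
    also have "\<dots> \<ge> (1 / (real p)\<^sup>2) * (1 / C) * \<beta> ^ 4 / 128 - 9 * \<delta> * \<beta>\<^sup>2 / 8"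
      by (rule main_bound[OF p1 assms(3) f01 g01 gf EP(1,2,3,4) sig assms(5) b0 bG' Gk' ss tt C])
    finally show ?thesis .
  qed
  have c2: "Lambda3 p n g f f \<ge> (1 / (real p)\<^sup>2) * (1 / C) * \<beta> ^ 4 / 128 - 9 * \<delta> * \<beta>\<^sup>2 / 8"
  proof (cases "p = 2")
    case True
    have L: "Lambda3 p n g f f \<ge> G ^ 3" using p2_case[OF True f01 g01 gf] ExG by simp
    have C1: "1 \<le> C"
    proof -
      have "real k * (real k - 1) \<ge> 2 * 1" using assms(3) by (intro mult_mono) auto
      thus ?thesis using C by simp
    qed
    have "(1 / (real p)\<^sup>2) * (1 / C) * \<beta> ^ 4 / 128 \<le> \<beta> ^ 4"
    proof -
      have q1: "1 / (real p)\<^sup>2 \<le> 1" using p1 by (simp add: power_le_one_iff one_le_power)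
      have q2: "1 / C \<le> 1" using C1 by simp
      have "(1 / (real p)\<^sup>2) * (1 / C) \<le> 1" using q1 q2 C1 by (intro mult_le_one) auto
      moreover have "0 \<le> (1 / (real p)\<^sup>2) * (1 / C)" using C1 by simp
      moreover have gen: "\<And>x::real. x \<le> 1 \<Longrightarrow> 0 \<le> x \<Longrightarrow> x / 128 \<le> 1" by simp
      ultimately have "(1 / (real p)\<^sup>2) * (1 / C) / 128 \<le> 1" by blast
      moreover have "0 \<le> \<beta> ^ 4" using b0 by simp
      ultimately show ?thesis using mult_right_mono[of "(1 / (real p)\<^sup>2) * (1 / C) / 128" 1 "\<beta> ^ 4"] by simp
    qed
    also have "\<beta> ^ 4 \<le> G ^ 4" using b0 bG by (intro power_mono) auto
    also have "G ^ 4 \<le> G ^ 3" using b0 bG G1 by (intro power_decreasing) auto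
    finally have "(1 / (real p)\<^sup>2) * (1 / C) * \<beta> ^ 4 / 128 \<le> G ^ 3" .
    moreover have "0 \<le> 9 * \<delta> * \<beta>\<^sup>2 / 8" using assms(5) by simp
    ultimately show ?thesis using L by linarith
  next
    case False
    hence "p > 2" using p1 by simp
    hence odd: "odd p" using assms(1) prime_odd_nat by simp
    have ss: "(1 * 1) mod p = 1" using p1 by simp
    have tt: "((p + 1) div 2 * 2) mod p = 1"
    proof -
      have "even (p + 1)" using odd by simp
      hence "(p + 1) div 2 * 2 = p + 1" by (rule dvd_div_mult_self)
      moreover have "(p + 1) mod p = 1" using p1 by (simp add: mod_Suc)
      ultimately show ?thesis by simp
    qed
    have "Lambda3 p n g f f = (\<Sum>m\<in>Fv p n. \<Sum>d\<in>Fv p n. g m * f (vadd p m (smul p 1 d)) * f (vadd p m (smul p 2 d))) / (real (card (Fv p n)))\<^sup>2"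
      unfolding Lambda3_def using lambda_reindex2[OF p1, of g f n] by simp
    also have "\<dots> \<ge> (1 / (real p)\<^sup>2) * (1 / C) * \<beta> ^ 4 / 128 - 9 * \<delta> * \<beta>\<^sup>2 / 8"
      by (rule main_bound[OF p1 assms(3) f01 g01 gf EP(1,2,3,4) sig assms(5) b0 bG' Gk' ss tt C])
    finally show ?thesis .
  qed
  show ?thesis using c1 c2 unfolding RHS by simp
qed


end
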